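(* Consider the RVI Q-learning algorithm below, for a weakly communicating finite SMDP satisfying (M), with $f$ satisfying (F), under requirements (R) and (R2). Let $K'>0$ be a constant and $$\delta_{n+1}=K'\max_{(s,a)}\big|(T_n(s,a)\vee\eta_n)^{-1}-t_{sa}^{-1}\big|.$$ Then, almost surely, $$\limsup_{n\to\infty}\frac{\ln(\delta_{n+1})}{\sum_{k=0}^n\alpha_k}\le\varsigma\max\Big\{\frac{\ell(\{\beta_n\})}{2},-1\Big\},$$ where $\varsigma$ is the constant in (R2)(ii).
   Context: $\mathcal{S},\mathcal{A}$ are finite, $d=|\mathcal{S}\times\mathcal{A}|$, and $\mathbf{1}$ is the all-ones vector. For each $(s,a)$, $\mathbb{P}_{sa}$ is a Borel probability measure on $\mathcal{S}\times\mathbb{R}_+\times\mathbb{R}$, the joint law of (next state $S$, holding time $\tau$, reward $R$). (M): (i) for some $\epsilon>0$, $\mathbb{P}_{sa}(\tau\le\epsilon)<1$ for all $(s,a)$; (ii) $\mathbb{E}_{sa}\tau^2,\mathbb{E}_{sa}R^2<\infty$. Let $r_{sa}=\mathbb{E}_{sa}R$, $t_{sa}=\mathbb{E}_{sa}\tau>0$, $p^a_{ss'}=\mathbb{P}_{sa}(S=s')$, and $t_{\min}=\min t_{sa}$. The SMDP is weakly communicating if there is a unique closed communicating class (each of its states reachable from every other under some policy, and no policy can leave it) and all other states are transient under every policy. (F): $g$ is SISTr at $x$ if $c\mapsto g(x+c\mathbf{1})$ is strictly increasing and onto $\mathbb{R}$; (i) $f$ is Lipschitz and SISTr at every point; (ii)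 $f(cx)/c\to f_\infty(x)$ pointwise as $c\uparrow\infty$, with $f_\infty$ SISTr at $0$. $L_f$ is the $\|\cdot\|_\infty$-Lipschitz constant of $f$, and $A_*=2/t_{\min}+L_f$. Algorithm: given $Q_0\in\mathbb{R}^d$ and $T_0\ge0$, for each $n$: - a random nonempty $Y_n\subset\mathcal{S}\times\mathcal{A}$ is chosen; - for each $(s,a)\in Y_n$, a fresh sample $(S^{sa}_{n+1},\tau^{sa}_{n+1},R^{sa}_{n+1})\sim\mathbb{P}_{sa}$ is generated conditionally on the past; - $\nu(n,(s,a))=\sum_{k<n}\mathbb{1}\{(s,a)\in Y_k\}$; - unselected components are unchanged, and for $(s,a)\in Y_n$: $$Q_{n+1}(s,a)=Q_n(s,a)+\alpha_{\nu(n,(s,a))}\Big(\frac{R^{sa}_{n+1}+\max_{a'}Q_n(S^{sa}_{n+1},a')-Q_n(s,a)}{T_n(s,a)\vee\eta_n}-f(Q_n)\Big),$$ $$T_{n+1}(s,a)=T_n(s,a)+\beta_{\nu(n,(s,a))}(\tau^{sa}_{n+1}-T_n(s,a)).$$ (R): (i) $\sum\alpha_n=\infty$, $\sum\alpha_n^2<\infty$, $\alpha_{n+1}\le\alpha_n$ eventually; for $x\in(0,1)$, $\sup_n\alpha_{[xn]}/\alpha_n<\infty$ and $\sum_{k\le[yn]}\alpha_k/\sum_{k\le n}\alpha_k\to1$ uniformly in $y\in[x,1]$. For a deterministic $\Delta>0$, $\liminf_n\nu(n,i)/n\ge\Delta$ a.s. for all $i$. For each $x>0$ and all $i,j$, $\lim_n\sum_{k=\nu(n,i)}^{\nu(N(n,x),i)}\alpha_k/\sum_{k=\nu(n,j)}^{\nu(N(n,x),j)}\alpha_k$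 exists a.s., where $N(n,x)=\min\{m>n:\sum_{k=n}^m\alpha_k\ge x\}$. (ii) $\beta_n\in[0,1]$, $\sum\beta_n=\infty$, $\sum\beta_n^2<\infty$. (iii) $\eta_n>0$, $\eta_n\to0$. (R2): for positive $\{a_n\}$, let $\ell(\{a_n\})=\limsup_n\ln(a_n)/\sum_{k=0}^na_k$. (i) Either - $\alpha_n=1/(An)$ with $A/2>A_*$, and a.s. for all $i$: $\nu(n,i)/n\to p_i\in(0,1]$ and $\limsup_nn^\gamma|\nu(n,i)/n-p_i|<\infty$ for a deterministic $\gamma>0$ with $\gamma A>A_*$; or - $\alpha_n=1/(An\ln n)$ with $A>A_*$. In both cases, $\alpha_n=1/A$ when the denominator is $0$. (ii) For some $\varsigma>A_*$: $\beta_n\ge\varsigma\alpha_n$ for all large $n$, and $-\varsigma\ell(\{\beta_n\})/2>A_*$. *)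

theory Defs
  imports "HOL-Probability.Probability"
begin

text \<open>Joint law space of (next state S, holding time tau, reward R).\<close>
definition sample_space :: "('s \<times> real \<times> real) measure" where
  "sample_space = count_space UNIV \<Otimes>\<^sub>M (borel \<Otimes>\<^sub>M borel)"

definition rmean :: "('s \<times> 'a \<Rightarrow> ('s \<times> real \<times> real) measure) \<Rightarrow> 's \<times> 'a \<Rightarrow> real" where
  "rmean P i = (\<integral>x. snd (snd x) \<partial>P i)"

definition tmean :: "('s \<times> 'a \<Rightarrow> ('s \<times> real \<times> real) measure) \<Rightarrow> 's \<times> 'a \<Rightarrow> real" where
  "tmean P i = (\<integral>x. fst (snd x) \<partial>P i)"

definition ptrans :: "('s \<times> 'a \<Rightarrow> ('s \<times> real \<times> real) measure) \<Rightarrow> 's \<Rightarrow> 'a \<Rightarrow> 's \<Rightarrow> real" where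
  "ptrans P s a s' = measure (P (s, a)) {x. fst x = s'}"

definition tmin :: "('s \<times> 'a \<Rightarrow> ('s \<times> real \<times> real) measure) \<Rightarrow> real" where
  "tmin P = Min (range (tmean P))"

definition cond_M :: "('s \<times> 'a \<Rightarrow> ('s \<times> real \<times> real) measure) \<Rightarrow> bool" where
  "cond_M P \<longleftrightarrow>
     (\<exists>\<epsilon>>0. \<forall>i. measure (P i) {x. fst (snd x) \<le> \<epsilon>} < 1) \<and>
     (\<forall>i. integrable (P i) (\<lambda>x. (fst (snd x))\<^sup>2) \<and> integrable (P i) (\<lambda>x. (snd (snd x))\<^sup>2))"

definition pol_edges :: "('s \<Rightarrow> 'a \<Rightarrow> 's \<Rightarrow> real) \<Rightarrow> ('s \<Rightarrow> 'a) \<Rightarrow> ('s \<times> 's) set" where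
  "pol_edges p \<pi> = {(s, s'). p s (\<pi> s) s' > 0}"

definition reachable_under :: "('s \<Rightarrow> 'a \<Rightarrow> 's \<Rightarrow> real) \<Rightarrow> ('s \<Rightarrow> 'a) \<Rightarrow> 's \<Rightarrow> 's \<Rightarrow> bool" where
  "reachable_under p \<pi> s s' \<longleftrightarrow> (s, s') \<in> (pol_edges p \<pi>)\<^sup>*"

definition transient_under :: "('s \<Rightarrow> 'a \<Rightarrow> 's \<Rightarrow> real) \<Rightarrow> ('s \<Rightarrow> 'a) \<Rightarrow> 's \<Rightarrow> bool" where
  "transient_under p \<pi> s \<longleftrightarrow> (\<exists>s'. reachable_under p \<pi> s s' \<and> \<not> reachable_under p \<pi> s' s)"

definition closed_comm_class :: "('s \<Rightarrow> 'a \<Rightarrow> 's \<Rightarrow> real) \<Rightarrow> 's set \<Rightarrow> bool" where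
  "closed_comm_class p C \<longleftrightarrow> C \<noteq> {} \<and>
     (\<forall>s\<in>C. \<forall>s'\<in>C. \<exists>\<pi>. reachable_under p \<pi> s s') \<and>
     (\<forall>s\<in>C. \<forall>a s'. p s a s' > 0 \<longrightarrow> s' \<in> C)"

definition weakly_communicating :: "('s \<Rightarrow> 'a \<Rightarrow> 's \<Rightarrow> real) \<Rightarrow> bool" where
  "weakly_communicating p \<longleftrightarrow>
     (\<exists>C. closed_comm_class p C \<and> (\<forall>C'. closed_comm_class p C' \<longrightarrow> C' = C) \<and>
          (\<forall>\<pi> s. s \<notin> C \<longrightarrow> transient_under p \<pi> s))"

definition sup_norm :: "('i::finite \<Rightarrow> real) \<Rightarrow> real" where
  "sup_norm x = Max (range (\<lambda>i. \<bar>x i\<bar>))"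

definition SISTr :: "(('i \<Rightarrow> real) \<Rightarrow> real) \<Rightarrow> ('i \<Rightarrow> real) \<Rightarrow> bool" where
  "SISTr g x \<longleftrightarrow> strict_mono (\<lambda>c::real. g (\<lambda>i. x i + c)) \<and> surj (\<lambda>c::real. g (\<lambda>i. x i + c))"

definition sup_lipschitz :: "(('i::finite \<Rightarrow> real) \<Rightarrow> real) \<Rightarrow> bool" where
  "sup_lipschitz f \<longleftrightarrow> (\<exists>L. \<forall>x y. \<bar>f x - f y\<bar> \<le> L * sup_norm (\<lambda>i. x i - y i))"

definition lip_const :: "(('i::finite \<Rightarrow> real) \<Rightarrow> real) \<Rightarrow> real" where
  "lip_const f = Inf {L. L \<ge> 0 \<and> (\<forall>x y. \<bar>f x - f y\<bar> \<le> L * sup_norm (\<lambda>i. x i - y i))}"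

definition cond_F :: "(('i::finite \<Rightarrow> real) \<Rightarrow> real) \<Rightarrow> bool" where
  "cond_F f \<longleftrightarrow> sup_lipschitz f \<and> (\<forall>x. SISTr f x) \<and>
     (\<exists>finf. (\<forall>x. ((\<lambda>c::real. f (\<lambda>i. c * x i) / c) \<longlongrightarrow> finf x) at_top) \<and> SISTr finf (\<lambda>i. 0))"

definition A_star :: "('s::finite \<times> 'a::finite \<Rightarrow> ('s \<times> real \<times> real) measure) \<Rightarrow> (('s \<times> 'a \<Rightarrow> real) \<Rightarrow> real) \<Rightarrow> real" where
  "A_star P f = 2 / tmin P + lip_const f"

definition nu :: "(nat \<Rightarrow> 'w \<Rightarrow> 'i set) \<Rightarrow> nat \<Rightarrow> 'i \<Rightarrow> 'w \<Rightarrow> nat" where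
  "nu Y n i w = card {k. k < n \<and> i \<in> Y k w}"

text \<open>X n i w is the sample (S, tau, R) with index n+1 for component i.\<close>
primrec QT :: "('s \<times> 'a \<Rightarrow> real) \<Rightarrow> ('s \<times> 'a \<Rightarrow> real) \<Rightarrow> (nat \<Rightarrow> real) \<Rightarrow> (nat \<Rightarrow> real) \<Rightarrow> (nat \<Rightarrow> real)
   \<Rightarrow> (('s \<times> 'a \<Rightarrow> real) \<Rightarrow> real) \<Rightarrow> (nat \<Rightarrow> 'w \<Rightarrow> ('s \<times> 'a) set)
   \<Rightarrow> (nat \<Rightarrow> 's \<times> 'a \<Rightarrow> 'w \<Rightarrow> 's \<times> real \<times> real)
   \<Rightarrow> nat \<Rightarrow> 'w \<Rightarrow> ('s \<times> 'a \<Rightarrow> real) \<times> ('s \<times> 'a \<Rightarrow> real)" where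
  "QT Q0 T0 \<alpha> \<beta> \<eta> f Y X 0 w = (Q0, T0)"
| "QT Q0 T0 \<alpha> \<beta> \<eta> f Y X (Suc n) w =
     (let (Q, T) = QT Q0 T0 \<alpha> \<beta> \<eta> f Y X n w in
      ((\<lambda>i. if i \<in> Y n w then
              Q i + \<alpha> (nu Y n i w) *
                ((snd (snd (X n i w)) + Max (range (\<lambda>a'. Q (fst (X n i w), a'))) - Q i)
                   / max (T i) (\<eta> n) - f Q)
            else Q i),
       (\<lambda>i. if i \<in> Y n w then T i + \<beta> (nu Y n i w) * (fst (snd (X n i w)) - T i) else T i)))"

definition Nidx :: "(nat \<Rightarrow> real) \<Rightarrow> nat \<Rightarrow> real \<Rightarrow> nat" where
  "Nidx \<alpha> n x = (LEAST m. m > n \<and> (\<Sum>k=n..m. \<alpha> k) \<ge> x)"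

definition ell :: "(nat \<Rightarrow> real) \<Rightarrow> ereal" where
  "ell a = limsup (\<lambda>n. ereal (ln (a n) / (\<Sum>k\<le>n. a k)))"

definition eln :: "real \<Rightarrow> ereal" where
  "eln x = (if x = 0 then -\<infinity> else ereal (ln x))"

definition cond_R_alpha :: "(nat \<Rightarrow> real) \<Rightarrow> bool" where
  "cond_R_alpha \<alpha> \<longleftrightarrow>
     filterlim (\<lambda>n. \<Sum>k\<le>n. \<alpha> k) at_top sequentially \<and>
     summable (\<lambda>n. (\<alpha> n)\<^sup>2) \<and>
     (\<forall>\<^sub>F n in sequentially. \<alpha> (Suc n) \<le> \<alpha> n) \<and>
     (\<forall>x::real. 0 < x \<and> x < 1 \<longrightarrow>
        bdd_above (range (\<lambda>n. \<alpha> (nat \<lfloor>x * real n\<rfloor>) / \<alpha> n)) \<and>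
        uniform_limit {x..1} (\<lambda>n y. (\<Sum>k\<le>nat \<lfloor>y * real n\<rfloor>. \<alpha> k) / (\<Sum>k\<le>n. \<alpha> k))
           (\<lambda>y. 1) sequentially)"

definition cond_R_beta :: "(nat \<Rightarrow> real) \<Rightarrow> bool" where
  "cond_R_beta \<beta> \<longleftrightarrow> (\<forall>n. 0 \<le> \<beta> n \<and> \<beta> n \<le> 1) \<and>
     filterlim (\<lambda>n. \<Sum>k\<le>n. \<beta> k) at_top sequentially \<and> summable (\<lambda>n. (\<beta> n)\<^sup>2)"

end

theory Submission
  imports Defs
begin


locale sa_setting =
  fixes M :: "'w measure" and F :: "nat \<Rightarrow> 'w measure"
    and P :: "'i \<Rightarrow> ('s \<times> real \<times> real) measure"
    and Y :: "nat \<Rightarrow> 'w \<Rightarrow> 'i set"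
    and X :: "nat \<Rightarrow> 'i \<Rightarrow> 'w \<Rightarrow> 's \<times> real \<times> real"
  assumes M: "prob_space M"
    and P_prob: "\<And>i. prob_space (P i)"
    and P_sets: "\<And>i. sets (P i) = sets sample_space"
    and F_sub: "\<And>n. subalgebra M (F n)"
    and F_mono: "\<And>n. sets (F n) \<subseteq> sets (F (Suc n))"
    and Y_meas: "\<And>n i. {w \<in> space M. i \<in> Y n w} \<in> sets (F n)"
    and X_meas: "\<And>n i. X n i \<in> measurable (F (Suc n)) sample_space"
    and X_law: "\<And>n i A B. A \<in> sets sample_space \<Longrightarrow> B \<in> sets (F n) \<Longrightarrow>
        measure M {w \<in> space M. w \<in> B \<and> i \<in> Y n w \<and> X n i w \<in> A}
          = measure (P i) A * measure M {w \<in> space M. w \<in> B \<and> i \<in> Y n w}"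
begin

definition Ys :: "nat \<Rightarrow> 'i \<Rightarrow> 'w set" where
  "Ys n i = {w \<in> space M. i \<in> Y n w}"

lemma Ys_F: "Ys n i \<in> sets (F n)"
  unfolding Ys_def by (rule Y_meas)

lemma space_F: "space (F n) = space M"
  using F_sub[of n] unfolding subalgebra_def by auto

lemma sets_F_M: "sets (F n) \<subseteq> sets M"
  using F_sub[of n] unfolding subalgebra_def by auto

lemma Ys_M: "Ys n i \<in> sets M"
  using Ys_F sets_F_M by blast

lemma fact:
  fixes g :: "'w \<Rightarrow> real" and \<phi> :: "'s \<times> real \<times> real \<Rightarrow> real"
  assumes g: "g \<in> borel_measurable (F n)" and gb: "\<And>w. w \<in> space M \<Longrightarrow> \<bar>g w\<bar> \<le> B"
    and phm: "\<phi> \<in> borel_measurable sample_space" and phi: "integrable (P i) \<phi>"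
  shows "integrable M (\<lambda>w. indicator (Ys n i) w * g w * \<phi> (X n i w))"
    and "(\<integral>w. indicator (Ys n i) w * g w * \<phi> (X n i w) \<partial>M)
          = (\<integral>w. indicator (Ys n i) w * g w \<partial>M) * (\<integral>x. \<phi> x \<partial>P i)"
proof -
  interpret M: prob_space M by (rule M)
  interpret Pi: prob_space "P i" by (rule P_prob)
  define N where "N = density M (\<lambda>x. ennreal (indicator (Ys n i) x :: real))"
  have sN: "sets N = sets M" and spN: "space N = space M" unfolding N_def by auto
  have YsM: "Ys n i \<in> sets M" by (rule Ys_M)
  have eN: "emeasure N A = emeasure M (A \<inter> Ys n i)" if "A \<in> sets M" for A
  proof -
    have "emeasure N A = (\<integral>\<^sup>+ x. indicator (Ys n i) x * indicator A x \<partial>M)"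
      unfolding N_def using that YsM by (subst emeasure_density) (auto simp: ennreal_indicator)
    also have "\<dots> = (\<integral>\<^sup>+ x. indicator (A \<inter> Ys n i) x \<partial>M)"
      by (intro nn_integral_cong) (simp split: split_indicator)
    also have "\<dots> = emeasure M (A \<inter> Ys n i)"
      using that YsM by (intro nn_integral_indicator) auto
    finally show ?thesis .
  qed
  have finN: "finite_measure N"
    by (rule finite_measureI) (simp add: eN[OF sets.top] spN)
  have subN: "subalgebra N (F n)"
    using F_sub[of n] sN spN unfolding subalgebra_def by auto
  define M1 where "M1 = restr_to_subalg N (F n)"
  have finM1: "finite_measure M1" unfolding M1_def by (rule finite_measure_restr_to_subalg[OF subN finN])
  have sM1: "sets M1 = sets (F n)" unfolding M1_def by (rule sets_restr_to_subalg[OF subN])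
  have spM1: "space M1 = space M" unfolding M1_def by (simp add: space_restr_to_subalg spN)
  have idm: "(\<lambda>w. w) \<in> measurable N M1"
  proof -
    have "(\<lambda>w. w) \<in> measurable M1 M1" by simp
    hence "(\<lambda>w. w) \<in> measurable (F n) M1" using sM1 measurable_cong_sets by blast
    thus ?thesis by (rule measurable_from_subalg[OF subN])
  qed
  have subN1: "subalgebra N (F (Suc n))"
    using F_sub[of "Suc n"] sN spN unfolding subalgebra_def by auto
  have Xm: "X n i \<in> measurable N (P i)"
  proof -
    have "X n i \<in> measurable (F (Suc n)) (P i)"
      using X_meas[of n i] P_sets[of i] measurable_cong_sets by blast
    thus ?thesis by (rule measurable_from_subalg[OF subN1])
  qed
  have pm: "(\<lambda>w. (w, X n i w)) \<in> measurable N (M1 \<Otimes>\<^sub>M P i)"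
    using idm Xm by (rule measurable_Pair)
  define J where "J = distr N (M1 \<Otimes>\<^sub>M P i) (\<lambda>w. (w, X n i w))"
  have JP: "M1 \<Otimes>\<^sub>M P i = J"
  proof (rule pair_measure_eqI)
    show "sigma_finite_measure M1" using finM1 by (simp add: finite_measure_def)
    show "sigma_finite_measure (P i)" by (simp add: Pi.sigma_finite_measure_axioms)
    show "sets (M1 \<Otimes>\<^sub>M P i) = sets J" unfolding J_def by simp
    fix A B assume A: "A \<in> sets M1" and B: "B \<in> sets (P i)"
    have AF: "A \<in> sets (F n)" using A sM1 by simp
    have AM: "A \<in> sets M" using AF sets_F_M by blast
    have BS: "B \<in> sets sample_space" using B P_sets by simp
    have e1: "emeasure M1 A = emeasure M (A \<inter> Ys n i)"
      unfolding M1_def using emeasure_restr_to_subalg[OF subN AF] eN[OF AM] by simp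
    have "emeasure J (A \<times> B) = emeasure N ((\<lambda>w. (w, X n i w)) -` (A \<times> B) \<inter> space N)"
      unfolding J_def using A B pm by (subst emeasure_distr) auto
    also have "(\<lambda>w. (w, X n i w)) -` (A \<times> B) \<inter> space N = {w \<in> space M. w \<in> A \<and> X n i w \<in> B}"
      using spN by auto
    also have "emeasure N {w \<in> space M. w \<in> A \<and> X n i w \<in> B} = 
        emeasure M ({w \<in> space M. w \<in> A \<and> X n i w \<in> B} \<inter> Ys n i)"
    proof (rule eN)
      have "(\<lambda>w. (w, X n i w)) -` (A \<times> B) \<inter> space N \<in> sets N"
        by (rule measurable_sets[OF pm]) (simp add: A B pair_measureI)
      moreover have "(\<lambda>w. (w, X n i w)) -` (A \<times> B) \<inter> space N = {w \<in> space M. w \<in> A \<and> X n i w \<in> B}"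
        using spN by auto
      ultimately show "{w \<in> space M. w \<in> A \<and> X n i w \<in> B} \<in> sets M" using sN by simp
    qed
    also have "{w \<in> space M. w \<in> A \<and> X n i w \<in> B} \<inter> Ys n i = {w \<in> space M. w \<in> A \<and> i \<in> Y n w \<and> X n i w \<in> B}"
      unfolding Ys_def by auto
    also have "emeasure M \<dots> = ennreal (measure M {w \<in> space M. w \<in> A \<and> i \<in> Y n w \<and> X n i w \<in> B})"
      by (simp add: M.emeasure_eq_measure)
    also have "\<dots> = ennreal (measure (P i) B * measure M {w \<in> space M. w \<in> A \<and> i \<in> Y n w})"
      using X_law[OF BS AF] by simp
    also have "{w \<in> space M. w \<in> A \<and> i \<in> Y n w} = A \<inter> Ys n i" unfolding Ys_def using AM sets.sets_into_space by blast
    finally show "emeasure M1 A * emeasure (P i) B = emeasure J (A \<times> B)"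
      using e1 by (simp add: M.emeasure_eq_measure Pi.emeasure_eq_measure ennreal_mult' mult.commute)
  qed
  interpret M1: finite_measure M1 by (rule finM1)
  interpret PP: pair_sigma_finite M1 "P i"
    by (simp add: M1.sigma_finite_measure_axioms Pi.sigma_finite_measure_axioms pair_sigma_finite.intro)
  have gM1: "g \<in> borel_measurable M1" using g sM1 measurable_cong_sets by blast
  have phP: "\<phi> \<in> borel_measurable (P i)" using phm P_sets measurable_cong_sets by blast
  have gint: "integrable M1 g"
    by (rule M1.integrable_const_bound[where B=B]) (use gb spM1 gM1 in auto)
  have prodm: "(\<lambda>(w,x). g w * \<phi> x) \<in> borel_measurable (M1 \<Otimes>\<^sub>M P i)"
    using gM1 phP by measurable
  have pint: "integrable (M1 \<Otimes>\<^sub>M P i) (\<lambda>(w,x). g w * \<phi> x)"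
  proof (rule PP.Fubini_integrable)
    show "(\<lambda>(w,x). g w * \<phi> x) \<in> borel_measurable (M1 \<Otimes>\<^sub>M P i)" by (rule prodm)
    have "integrable M1 (\<lambda>w. \<bar>g w\<bar> * (\<integral>x. norm (\<phi> x) \<partial>P i))"
      using gint by auto
    thus "integrable M1 (\<lambda>w. \<integral>x. norm (case (w, x) of (w, x) \<Rightarrow> g w * \<phi> x) \<partial>P i)"
      by (simp add: abs_mult)
    show "AE w in M1. integrable (P i) (\<lambda>x. case (w, x) of (w, x) \<Rightarrow> g w * \<phi> x)"
      using phi by auto
  qed
  have gN: "g \<in> borel_measurable N" using g by (rule measurable_from_subalg[OF subN])
  have phN: "(\<lambda>w. \<phi> (X n i w)) \<in> borel_measurable N" using Xm phP by (rule measurable_compose)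
  have "integrable J (\<lambda>(w,x). g w * \<phi> x)" using pint JP by simp
  hence intN: "integrable N (\<lambda>w. g w * \<phi> (X n i w))"
    unfolding J_def using pm prodm by (subst (asm) integrable_distr_eq) auto
  have indm: "(indicator (Ys n i) :: 'w \<Rightarrow> real) \<in> borel_measurable M" using YsM by simp
  have gM: "g \<in> borel_measurable M" by (rule measurable_from_subalg[OF F_sub g])
  have phM: "(\<lambda>w. \<phi> (X n i w)) \<in> borel_measurable M" using phN sN measurable_cong_sets by blast
  have fm: "(\<lambda>w. g w * \<phi> (X n i w)) \<in> borel_measurable M" by (rule borel_measurable_times[OF gM phM])
  have ae: "AE x in M. 0 \<le> (indicator (Ys n i) x :: real)" by simp
  have ID: "integrable N f \<longleftrightarrow> integrable M (\<lambda>x. indicator (Ys n i) x *\<^sub>R f x)" 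
    if "f \<in> borel_measurable M" for f :: "'w \<Rightarrow> real"
    unfolding N_def by (rule integrable_density[OF that indm ae])
  have IE: "integral\<^sup>L N f = integral\<^sup>L M (\<lambda>x. indicator (Ys n i) x *\<^sub>R f x)" 
    if "f \<in> borel_measurable M" for f :: "'w \<Rightarrow> real"
    unfolding N_def by (rule integral_density[OF that indm ae])
  show int: "integrable M (\<lambda>w. indicator (Ys n i) w * g w * \<phi> (X n i w))"
    using intN ID[OF fm] by (simp add: mult.assoc)
  have "(\<integral>w. indicator (Ys n i) w * g w * \<phi> (X n i w) \<partial>M) = (\<integral>w. g w * \<phi> (X n i w) \<partial>N)"
    using IE[OF fm] by (simp add: mult.assoc)
  also have "\<dots> = (\<integral>z. (\<lambda>(w,x). g w * \<phi> x) z \<partial>J)"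
    unfolding J_def using pm prodm by (subst integral_distr) auto
  also have "\<dots> = (\<integral>z. (\<lambda>(w,x). g w * \<phi> x) z \<partial>(M1 \<Otimes>\<^sub>M P i))" using JP by simp
  also have "\<dots> = (\<integral>w. (\<integral>x. g w * \<phi> x \<partial>P i) \<partial>M1)"
    using PP.integral_fst'[OF pint] by simp
  also have "\<dots> = (\<integral>w. g w \<partial>M1) * (\<integral>x. \<phi> x \<partial>P i)" by simp
  also have "(\<integral>w. g w \<partial>M1) = (\<integral>w. g w \<partial>N)"
    unfolding M1_def by (rule integral_subalgebra2[OF subN g])
  also have "\<dots> = (\<integral>w. indicator (Ys n i) w * g w \<partial>M)"
    using IE[OF gM] by simp
  finally show "(\<integral>w. indicator (Ys n i) w * g w * \<phi> (X n i w) \<partial>M)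
          = (\<integral>w. indicator (Ys n i) w * g w \<partial>M) * (\<integral>x. \<phi> x \<partial>P i)" .
qed

end


primrec Tseq :: "(nat \<Rightarrow> 'w \<Rightarrow> 'i set) \<Rightarrow> (nat \<Rightarrow> 'i \<Rightarrow> 'w \<Rightarrow> 's \<times> real \<times> real) \<Rightarrow> ('i \<Rightarrow> real)
   \<Rightarrow> (nat \<Rightarrow> real) \<Rightarrow> nat \<Rightarrow> 'w \<Rightarrow> 'i \<Rightarrow> real" where
  "Tseq Y X T0 \<beta> 0 w = T0"
| "Tseq Y X T0 \<beta> (Suc n) w = (\<lambda>i. if i \<in> Y n w then Tseq Y X T0 \<beta> n w i + \<beta> (nu Y n i w) *
      (fst (snd (X n i w)) - Tseq Y X T0 \<beta> n w i) else Tseq Y X T0 \<beta> n w i)"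

lemma snd_QT: "snd (QT Q0 T0 \<alpha> \<beta> \<eta> f Y X n w) = Tseq Y X T0 \<beta> n w"
  by (induction n) (auto simp: Let_def split: prod.split)

lemma nu_Suc: "nu Y (Suc n) i w = nu Y n i w + (if i \<in> Y n w then 1 else 0)"
proof -
  have "{k. k < Suc n \<and> i \<in> Y k w} = {k. k < n \<and> i \<in> Y k w} \<union> (if i \<in> Y n w then {n} else {})"
    by (auto simp: less_Suc_eq)
  moreover have "finite {k. k < n \<and> i \<in> Y k w}" by auto
  ultimately show ?thesis unfolding nu_def by auto
qed

lemma nu_0: "nu Y 0 i w = 0" unfolding nu_def by simp

lemma nu_le: "nu Y n i w \<le> n"
proof -
  have "card {k. k < n \<and> i \<in> Y k w} \<le> card {..<n}" by (intro card_mono) auto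
  thus ?thesis unfolding nu_def by simp
qed

definition Sb :: "(nat \<Rightarrow> real) \<Rightarrow> nat \<Rightarrow> real" where
  "Sb \<beta> m = (\<Sum>j<m. \<beta> j)"

lemma Sb_Suc: "Sb \<beta> (Suc m) = Sb \<beta> m + \<beta> m" unfolding Sb_def by simp

lemma Sb_0: "Sb \<beta> 0 = 0" unfolding Sb_def by simp

lemma Sb_nonneg: "(\<And>j. 0 \<le> \<beta> j) \<Longrightarrow> 0 \<le> Sb \<beta> m" unfolding Sb_def by (simp add: sum_nonneg)

lemma Sb_le: "(\<And>j. \<beta> j \<le> 1) \<Longrightarrow> Sb \<beta> m \<le> real m"
  unfolding Sb_def using sum_mono[of "{..<m}" \<beta> "\<lambda>_. 1"] by simp

lemma Sb_mono: "(\<And>j. 0 \<le> \<beta> j) \<Longrightarrow> m \<le> m' \<Longrightarrow> Sb \<beta> m \<le> Sb \<beta> m'"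
  unfolding Sb_def by (intro sum_mono2) auto

lemma fstsnd_meas: "(\<lambda>x. fst (snd x)) \<in> borel_measurable (sample_space :: ('s \<times> real \<times> real) measure)"
  unfolding sample_space_def by measurable



context sa_setting
begin

lemma sets_F_le: "k \<le> n \<Longrightarrow> sets (F k) \<subseteq> sets (F n)"
  by (rule lift_Suc_mono_le[of "\<lambda>n. sets (F n)"]) (use F_mono in auto)

lemma sub_FF: "k \<le> n \<Longrightarrow> subalgebra (F n) (F k)"
  unfolding subalgebra_def using sets_F_le space_F by auto

lemma meas_lift: "k \<le> n \<Longrightarrow> f \<in> measurable (F k) N \<Longrightarrow> f \<in> measurable (F n) N"
  by (rule measurable_from_subalg[OF sub_FF])

lemma Ypred: "k \<le> n \<Longrightarrow> {w \<in> space (F n). i \<in> Y k w} \<in> sets (F n)"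
  using Y_meas[where n=k and i=i] sets_F_le[of k n] space_F by auto

lemma nu_meas: "(\<lambda>w. nu Y n i w) \<in> measurable (F n) (count_space UNIV)"
proof (induction n)
  case 0
  show ?case by (simp add: nu_0)
next
  case (Suc n)
  have l: "(\<lambda>w. nu Y n i w) \<in> measurable (F (Suc n)) (count_space UNIV)"
    by (rule meas_lift[OF _ Suc]) simp
  have "(\<lambda>w. (\<lambda>m w. if i \<in> Y n w then m + 1 else m) (nu Y n i w) w) \<in> measurable (F (Suc n)) (count_space UNIV)"
  proof (rule measurable_compose_countable[OF _ l])
    fix m :: nat
    show "(\<lambda>w. if i \<in> Y n w then m + 1 else m) \<in> measurable (F (Suc n)) (count_space UNIV)"
      by (rule measurable_If) (auto intro: Ypred)
  qed
  moreover have "(\<lambda>w. nu Y (Suc n) i w) = (\<lambda>w. if i \<in> Y n w then nu Y n i w + 1 else nu Y n i w)"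
    by (auto simp: nu_Suc)
  ultimately show ?case by simp
qed

lemma beta_nu_meas: "(\<lambda>w. (b :: nat \<Rightarrow> real) (nu Y n i w)) \<in> borel_measurable (F n)"
  using nu_meas by (rule measurable_compose) simp

lemma tau_meas: "(\<lambda>w. fst (snd (X n i w))) \<in> borel_measurable (F (Suc n))"
  using X_meas fstsnd_meas by (rule measurable_compose)

lemma T_meas: "(\<lambda>w. Tseq Y X T0 \<beta> n w i) \<in> borel_measurable (F n)"
proof (induction n)
  case 0 show ?case by simp
next
  case (Suc n)
  have l: "(\<lambda>w. Tseq Y X T0 \<beta> n w i) \<in> borel_measurable (F (Suc n))"
    by (rule meas_lift[OF _ Suc]) simp
  have b: "(\<lambda>w. \<beta> (nu Y n i w)) \<in> borel_measurable (F (Suc n))"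
    by (rule meas_lift[OF _ beta_nu_meas]) simp
  show ?case
    by (simp only: Tseq.simps, rule measurable_If)
       (auto intro!: borel_measurable_add borel_measurable_times borel_measurable_diff l b tau_meas Ypred)
qed

end


locale sa_proc = sa_setting M F P Y X
  for M :: "'w measure" and F and P :: "'i \<Rightarrow> ('s \<times> real \<times> real) measure" and Y and X +
  fixes \<beta> :: "nat \<Rightarrow> real" and T0 :: "'i \<Rightarrow> real" and i :: 'i and c :: real
  assumes b0: "\<And>n. 0 \<le> \<beta> n" and b1: "\<And>n. \<beta> n \<le> 1"
    and c0: "0 \<le> c" and c1: "c \<le> 1"
    and summD: "summable (\<lambda>j. exp (2*c*Sb \<beta> (Suc j)) * (\<beta> j)\<^sup>2)"
    and tau2: "integrable (P i) (\<lambda>x. (fst (snd x))\<^sup>2)"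
    and tau1: "integrable (P i) (\<lambda>x. fst (snd x))"
begin

definition tt where "tt = (\<integral>x. fst (snd x) \<partial>P i)"
definition sig2 where "sig2 = (\<integral>x. (fst (snd x) - tt)\<^sup>2 \<partial>P i)"
definition Dp where "Dp m = (\<Sum>j<m. exp (2*c*Sb \<beta> (Suc j)) * (\<beta> j)\<^sup>2)"
definition Dinf where "Dinf = (\<Sum>j. exp (2*c*Sb \<beta> (Suc j)) * (\<beta> j)\<^sup>2)"
definition ee where "ee n w = Tseq Y X T0 \<beta> n w i - tt"
definition hh where "hh n w = exp (2*c*Sb \<beta> (nu Y n i w))"
definition AA where "AA n w = hh n w * (ee n w)\<^sup>2 + sig2 * (Dinf - Dp (nu Y n i w))"
definition A0 where "A0 = (T0 i - tt)\<^sup>2 + sig2 * Dinf"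
definition bb where "bb n w = \<beta> (nu Y n i w)"
definition hh' where "hh' n w = exp (2*c*Sb \<beta> (Suc (nu Y n i w)))"
definition g1 where "g1 n w = (hh' n w * (1 - bb n w)\<^sup>2 - hh n w) * (ee n w)\<^sup>2"
definition g2 where "g2 n w = 2 * hh' n w * bb n w * (1 - bb n w) * ee n w"
definition g3 where "g3 n w = hh' n w * (bb n w)\<^sup>2"
definition ph1 where "ph1 x = fst (snd x) - tt"
definition ph2 where "ph2 x = (fst (snd x) - tt)\<^sup>2 - sig2"

lemma Pi_prob: "prob_space (P i)" by (rule P_prob)

lemma tsq_int: "integrable (P i) (\<lambda>x. (fst (snd x) - tt)\<^sup>2)"
proof -
  interpret Pi: prob_space "P i" by (rule P_prob)
  have "integrable (P i) (\<lambda>x. (fst (snd x))\<^sup>2 - 2 * tt * fst (snd x) + tt\<^sup>2)"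
    using tau1 tau2 by (intro Bochner_Integration.integrable_add Bochner_Integration.integrable_diff integrable_mult_right Pi.integrable_const)
  thus ?thesis by (simp add: power2_diff algebra_simps)
qed

lemma ph1_int: "integrable (P i) ph1"
proof -
  interpret Pi: prob_space "P i" by (rule P_prob)
  show ?thesis unfolding ph1_def using tau1 by (intro Bochner_Integration.integrable_diff Pi.integrable_const)
qed

lemma ph2_int: "integrable (P i) ph2"
proof -
  interpret Pi: prob_space "P i" by (rule P_prob)
  show ?thesis unfolding ph2_def using tsq_int by (intro Bochner_Integration.integrable_diff Pi.integrable_const)
qed

lemma ph1_0: "(\<integral>x. ph1 x \<partial>P i) = 0"
proof -
  interpret Pi: prob_space "P i" by (rule P_prob)
  show ?thesis unfolding ph1_def tt_def using tau1
    by (subst Bochner_Integration.integral_diff) (auto simp: Pi.prob_space)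
qed

lemma ph2_0: "(\<integral>x. ph2 x \<partial>P i) = 0"
proof -
  interpret Pi: prob_space "P i" by (rule P_prob)
  show ?thesis unfolding ph2_def using tsq_int
    by (subst Bochner_Integration.integral_diff) (auto simp: sig2_def Pi.prob_space)
qed

lemma ph_meas: "ph1 \<in> borel_measurable sample_space" "ph2 \<in> borel_measurable sample_space"
  unfolding ph1_def ph2_def using fstsnd_meas by (auto intro!: borel_measurable_diff borel_measurable_power)

lemma sig2_nonneg: "0 \<le> sig2" unfolding sig2_def by (intro integral_nonneg_AE) auto

lemma Dp_le: "Dp m \<le> Dinf"
  unfolding Dp_def Dinf_def by (intro sum_le_suminf[OF summD]) auto

lemma Dp_Suc: "Dp (Suc m) = Dp m + exp (2*c*Sb \<beta> (Suc m)) * (\<beta> m)\<^sup>2"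
  unfolding Dp_def by simp

lemma hh_ge1: "1 \<le> hh n w"
  unfolding hh_def using Sb_nonneg[of \<beta>, OF b0] c0 by auto

lemma AA_nonneg: "0 \<le> AA n w"
  unfolding AA_def using hh_ge1[of n w] sig2_nonneg Dp_le[of "nu Y n i w"] by auto

lemma ee_sq_le: "(ee n w)\<^sup>2 \<le> AA n w"
proof -
  have "(ee n w)\<^sup>2 \<le> hh n w * (ee n w)\<^sup>2" using hh_ge1[of n w] by (simp add: mult_le_cancel_right1)
  also have "\<dots> \<le> AA n w" unfolding AA_def using sig2_nonneg Dp_le[of "nu Y n i w"] by auto
  finally show ?thesis .
qed

lemma AA_0: "AA 0 w = A0"
  unfolding AA_def A0_def hh_def ee_def by (simp add: nu_0 Sb_0 Dp_def)

lemma alg_id: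
  fixes H H' b E \<phi> s D d :: real
  shows "H' * ((1-b)*E + b*\<phi>)\<^sup>2 + s*(D - (d + H'*b\<^sup>2)) = H*E\<^sup>2 + s*(D-d) + ((H'*(1-b)\<^sup>2-H)*E\<^sup>2 + 2*H'*b*(1-b)*E*\<phi> + H'*b\<^sup>2*(\<phi>\<^sup>2 - s))"
  by (simp add: algebra_simps power2_eq_square)

lemma ph2_ph1: "ph2 x = (ph1 x)\<^sup>2 - sig2" unfolding ph1_def ph2_def by simp

lemma AA_Suc: 
  assumes w: "w \<in> space M"
  shows "AA (Suc n) w = AA n w + indicator (Ys n i) w * (g1 n w + g2 n w * ph1 (X n i w) + g3 n w * ph2 (X n i w))"
proof (cases "i \<in> Y n w")
  case True
  hence Y: "w \<in> Ys n i" using w unfolding Ys_def by auto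
  have nu: "nu Y (Suc n) i w = Suc (nu Y n i w)" using True by (simp add: nu_Suc)
  have hs: "hh (Suc n) w = hh' n w" unfolding hh_def hh'_def nu by simp
  have es: "ee (Suc n) w = (1 - bb n w) * ee n w + bb n w * ph1 (X n i w)"
    unfolding ee_def ph1_def bb_def using True by (simp add: algebra_simps)
  have ds: "Dp (nu Y (Suc n) i w) = Dp (nu Y n i w) + hh' n w * (bb n w)\<^sup>2"
    unfolding nu Dp_Suc hh'_def bb_def by simp
  have "AA (Suc n) w = hh' n w * ((1 - bb n w) * ee n w + bb n w * ph1 (X n i w))\<^sup>2 
      + sig2 * (Dinf - (Dp (nu Y n i w) + hh' n w * (bb n w)\<^sup>2))"
    unfolding AA_def hs es ds ..
  also have "\<dots> = AA n w + (g1 n w + g2 n w * ph1 (X n i w) + g3 n w * ph2 (X n i w))"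
    unfolding AA_def g1_def g2_def g3_def ph2_ph1 by (rule alg_id)
  finally show ?thesis using Y by simp
next
  case False
  hence Y: "w \<notin> Ys n i" unfolding Ys_def by auto
  have nu: "nu Y (Suc n) i w = nu Y n i w" using False by (simp add: nu_Suc)
  have "ee (Suc n) w = ee n w" unfolding ee_def using False by simp
  thus ?thesis using Y unfolding AA_def hh_def nu by simp
qed

lemma g1_nonpos: "g1 n w \<le> 0"
proof -
  let ?b = "bb n w"
  have b: "0 \<le> ?b" "?b \<le> 1" unfolding bb_def using b0 b1 by auto
  have "exp (c * ?b) * (1 - ?b) \<le> exp ?b * (1 - ?b)"
    using b c0 c1 by (intro mult_right_mono) (auto simp: mult_left_le_one_le)
  also have "\<dots> \<le> exp ?b * exp (- ?b)"
    using exp_ge_add_one_self[of "- ?b"] by (intro mult_left_mono) auto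
  also have "\<dots> = 1" by (simp add: exp_minus)
  finally have k: "exp (c * ?b) * (1 - ?b) \<le> 1" .
  have k2: "(exp (c * ?b) * (1 - ?b))\<^sup>2 \<le> 1"
    using k b by (intro power_le_one) auto
  have "2*c*(Sb \<beta> (nu Y n i w) + ?b) = 2*c*Sb \<beta> (nu Y n i w) + (c * ?b + c * ?b)"
    by (simp add: algebra_simps)
  hence "hh' n w = hh n w * (exp (c * ?b) * exp (c * ?b))"
    unfolding hh'_def hh_def Sb_Suc bb_def by (simp only: exp_add)
  hence "hh' n w * (1 - ?b)\<^sup>2 = hh n w * (exp (c * ?b) * (1 - ?b))\<^sup>2"
    by (simp add: power2_eq_square)
  also have "\<dots> \<le> hh n w" using k2 hh_ge1[of n w] by (simp add: mult_left_le)
  finally show ?thesis unfolding g1_def by (simp add: mult_nonpos_nonneg)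
qed

end


lemma abs_le_1_sq: "\<bar>x::real\<bar> \<le> 1 + x\<^sup>2"
proof (cases "\<bar>x\<bar> \<le> 1")
  case True thus ?thesis by (smt (verit) zero_le_power2)
next
  case False
  hence "\<bar>x\<bar> * 1 \<le> \<bar>x\<bar> * \<bar>x\<bar>" by (intro mult_left_mono) auto
  thus ?thesis by (simp add: power2_eq_square abs_mult_self)
qed

lemma bnd3: "0 \<le> (h'::real) \<Longrightarrow> h' \<le> E \<Longrightarrow> 0 \<le> b \<Longrightarrow> b \<le> 1 \<Longrightarrow> \<bar>h' * b\<^sup>2\<bar> \<le> E"
proof -
  assume a: "0 \<le> h'" "h' \<le> E" "0 \<le> b" "b \<le> 1"
  have "b\<^sup>2 \<le> 1" using a by (intro power_le_one) auto
  hence "h' * b\<^sup>2 \<le> h'" using a by (simp add: mult_left_le)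
  thus ?thesis using a by simp
qed

lemma bnd2: "0 \<le> (h'::real) \<Longrightarrow> h' \<le> E \<Longrightarrow> 0 \<le> b \<Longrightarrow> b \<le> 1 \<Longrightarrow> \<bar>e\<bar> \<le> K 
   \<Longrightarrow> \<bar>2 * h' * b * (1 - b) * e\<bar> \<le> 2 * E * K"
proof -
  assume a: "0 \<le> h'" "h' \<le> E" "0 \<le> b" "b \<le> 1" "\<bar>e\<bar> \<le> K"
  have "b * (1 - b) \<le> 1" using a by (intro mult_le_one) auto
  hence "h' * (b * (1 - b)) \<le> h'" using a by (simp add: mult_left_le)
  hence x: "h' * (b * (1 - b)) \<le> E" using a by simp
  have "h' * (b * (1 - b)) * \<bar>e\<bar> \<le> E * K" using x a by (intro mult_mono) auto
  moreover have "\<bar>2 * h' * b * (1 - b) * e\<bar> = 2 * (h' * (b * (1 - b)) * \<bar>e\<bar>)"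
    using a by (simp add: abs_mult)
  ultimately show ?thesis by simp
qed

lemma bnd1: "0 \<le> (h'::real) \<Longrightarrow> h' \<le> E \<Longrightarrow> 0 \<le> h \<Longrightarrow> h \<le> E \<Longrightarrow> 0 \<le> b \<Longrightarrow> b \<le> 1 \<Longrightarrow> e\<^sup>2 \<le> L
   \<Longrightarrow> \<bar>(h' * (1 - b)\<^sup>2 - h) * e\<^sup>2\<bar> \<le> 2 * E * L"
proof -
  assume a: "0 \<le> h'" "h' \<le> E" "0 \<le> h" "h \<le> E" "0 \<le> b" "b \<le> 1" "e\<^sup>2 \<le> L"
  have "(1 - b)\<^sup>2 \<le> 1" using a by (intro power_le_one) auto
  hence "h' * (1 - b)\<^sup>2 \<le> h'" using a by (simp add: mult_left_le)
  moreover have "0 \<le> h' * (1 - b)\<^sup>2" using a by simp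
  ultimately have x: "\<bar>h' * (1 - b)\<^sup>2 - h\<bar> \<le> E" using a by linarith
  have "\<bar>h' * (1 - b)\<^sup>2 - h\<bar> * e\<^sup>2 \<le> E * L" using x a by (intro mult_mono) auto
  moreover have "0 \<le> E * L" using a by (metis order.trans zero_le_power2 mult_nonneg_nonneg)
  ultimately show ?thesis by (simp add: abs_mult)
qed

context sa_proc
begin

lemma ee_meas: "(\<lambda>w. ee n w) \<in> borel_measurable (F n)"
  unfolding ee_def using T_meas by (intro borel_measurable_diff) auto

lemma hh_meas: "(\<lambda>w. hh n w) \<in> borel_measurable (F n)"
  unfolding hh_def using beta_nu_meas[of "\<lambda>m. exp (2*c*Sb \<beta> m)" n i] by simp

lemma hh'_meas: "(\<lambda>w. hh' n w) \<in> borel_measurable (F n)"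
  unfolding hh'_def using beta_nu_meas[of "\<lambda>m. exp (2*c*Sb \<beta> (Suc m))" n i] by simp

lemma bb_meas: "(\<lambda>w. bb n w) \<in> borel_measurable (F n)"
  unfolding bb_def using beta_nu_meas[of "\<beta>" n i] by simp

lemma Dpnu_meas: "(\<lambda>w. Dp (nu Y n i w)) \<in> borel_measurable (F n)"
  using beta_nu_meas[of "Dp" n i] by simp

lemma AA_meas: "(\<lambda>w. AA n w) \<in> borel_measurable (F n)"
  unfolding AA_def using hh_meas ee_meas Dpnu_meas
  by (intro borel_measurable_add borel_measurable_times borel_measurable_power borel_measurable_diff) auto

lemma AA_meas_M: "(\<lambda>w. AA n w) \<in> borel_measurable M"
  by (rule measurable_from_subalg[OF F_sub AA_meas])

lemma g1_meas: "(\<lambda>w. g1 n w) \<in> borel_measurable (F n)"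
  unfolding g1_def using hh_meas ee_meas hh'_meas bb_meas
  by (intro borel_measurable_add borel_measurable_times borel_measurable_power borel_measurable_diff) auto

lemma g2_meas: "(\<lambda>w. g2 n w) \<in> borel_measurable (F n)"
  unfolding g2_def using hh_meas ee_meas hh'_meas bb_meas
  by (intro borel_measurable_add borel_measurable_times borel_measurable_power borel_measurable_diff) auto

lemma g3_meas: "(\<lambda>w. g3 n w) \<in> borel_measurable (F n)"
  unfolding g3_def using hh_meas ee_meas hh'_meas bb_meas
  by (intro borel_measurable_add borel_measurable_times borel_measurable_power borel_measurable_diff) auto

lemma hh_le: "hh n w \<le> exp (2 * (real n + 1))"
proof -
  have "Sb \<beta> (nu Y n i w) \<le> real (nu Y n i w)" by (rule Sb_le[OF b1])
  also have "\<dots> \<le> real n" using nu_le by simp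
  finally have s: "Sb \<beta> (nu Y n i w) \<le> real n" .
  have "c * Sb \<beta> (nu Y n i w) \<le> Sb \<beta> (nu Y n i w)"
    using c0 c1 Sb_nonneg[of \<beta>, OF b0] by (simp add: mult_left_le_one_le)
  hence "c*Sb \<beta> (nu Y n i w) \<le> real n + 1" using s by linarith
  hence "2*c*Sb \<beta> (nu Y n i w) \<le> 2 * (real n + 1)" by simp
  thus ?thesis unfolding hh_def by simp
qed

lemma hh'_le: "hh' n w \<le> exp (2 * (real n + 1))"
proof -
  have "Sb \<beta> (Suc (nu Y n i w)) \<le> real (Suc (nu Y n i w))" by (rule Sb_le[OF b1])
  also have "\<dots> \<le> real n + 1" using nu_le by simp
  finally have s: "Sb \<beta> (Suc (nu Y n i w)) \<le> real n + 1" .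
  have "c * Sb \<beta> (Suc (nu Y n i w)) \<le> Sb \<beta> (Suc (nu Y n i w))"
    using c0 c1 Sb_nonneg[of \<beta>, OF b0] by (simp add: mult_left_le_one_le)
  hence "c*Sb \<beta> (Suc (nu Y n i w)) \<le> real n + 1" using s by linarith
  hence "2*c*Sb \<beta> (Suc (nu Y n i w)) \<le> 2 * (real n + 1)" by simp
  thus ?thesis unfolding hh'_def by simp
qed

lemma supermart:
  assumes G: "G \<in> sets (F n)" and lam: "0 < lv" and GA: "\<And>w. w \<in> G \<Longrightarrow> AA n w < lv"
  shows "integrable M (\<lambda>w. indicator G w * AA (Suc n) w)"
    and "(\<integral>w. indicator G w * AA (Suc n) w \<partial>M) \<le> (\<integral>w. indicator G w * AA n w \<partial>M)"
proof -
  interpret M: prob_space M by (rule M)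
  interpret Pi: prob_space "P i" by (rule P_prob)
  have GM: "G \<in> sets M" using G sets_F_M by blast
  define E where "E = exp (2 * (real n + 1))"
  have hb: "0 \<le> hh n w" "hh n w \<le> E" for w unfolding E_def using hh_le[of n w] by (auto simp: hh_def)
  have h'b: "0 \<le> hh' n w" "hh' n w \<le> E" for w unfolding E_def using hh'_le[of n w] by (auto simp: hh'_def)
  have E0: "0 \<le> E" unfolding E_def by simp
  have bb: "0 \<le> bb n w" "bb n w \<le> 1" for w unfolding bb_def using b0 b1 by auto
  have eb: "(ee n w)\<^sup>2 \<le> lv" if "w \<in> G" for w using ee_sq_le[of n w] GA[OF that] by simp
  have eab: "\<bar>ee n w\<bar> \<le> 1 + lv" if "w \<in> G" for w using abs_le_1_sq[of "ee n w"] eb[OF that] by simp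
  define k1 where "k1 w = indicator G w * g1 n w" for w
  define k2 where "k2 w = indicator G w * g2 n w" for w
  define k3 where "k3 w = indicator G w * g3 n w" for w
  have indG: "(indicator G :: 'w \<Rightarrow> real) \<in> borel_measurable (F n)" using G by simp
  have k1m: "k1 \<in> borel_measurable (F n)" unfolding k1_def using indG g1_meas by (rule borel_measurable_times)
  have k2m: "k2 \<in> borel_measurable (F n)" unfolding k2_def using indG g2_meas by (rule borel_measurable_times)
  have k3m: "k3 \<in> borel_measurable (F n)" unfolding k3_def using indG g3_meas by (rule borel_measurable_times)
  have k1b: "\<bar>k1 w\<bar> \<le> 2 * E * lv" for w
    unfolding k1_def g1_def using bnd1[OF h'b hb bb eb, of w] lam E0
    by (cases "w \<in> G") (auto simp: abs_mult)
  have k2b: "\<bar>k2 w\<bar> \<le> 2 * E * (1 + lv)" for w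
    unfolding k2_def g2_def using bnd2[OF h'b bb eab, of w] lam E0
    by (cases "w \<in> G") (auto simp: abs_mult)
  have k3b: "\<bar>k3 w\<bar> \<le> E" for w
    unfolding k3_def g3_def using bnd3[OF h'b bb, of w] E0
    by (cases "w \<in> G") (auto simp: abs_mult)
  have one_m: "(\<lambda>x. 1::real) \<in> borel_measurable sample_space" by simp
  have one_i: "integrable (P i) (\<lambda>x. 1::real)" by simp
  note f1 = fact[OF k1m _ one_m one_i, of "2 * E * lv"]
  note f2 = fact[OF k2m _ ph_meas(1) ph1_int, of "2 * E * (1 + lv)"]
  note f3 = fact[OF k3m _ ph_meas(2) ph2_int, of "E"]
  have i1: "integrable M (\<lambda>w. indicator (Ys n i) w * k1 w * 1)" using f1(1) k1b by blast
  have i2: "integrable M (\<lambda>w. indicator (Ys n i) w * k2 w * ph1 (X n i w))" using f2(1) k2b by blast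
  have i3: "integrable M (\<lambda>w. indicator (Ys n i) w * k3 w * ph2 (X n i w))" using f3(1) k3b by blast
  have I1: "(\<integral>w. indicator (Ys n i) w * k1 w * 1 \<partial>M) = (\<integral>w. indicator (Ys n i) w * k1 w \<partial>M)"
    using f1(2) k1b by (simp add: Pi.prob_space)
  have I2: "(\<integral>w. indicator (Ys n i) w * k2 w * ph1 (X n i w) \<partial>M) = 0"
    using f2(2) k2b ph1_0 by simp
  have I3: "(\<integral>w. indicator (Ys n i) w * k3 w * ph2 (X n i w) \<partial>M) = 0"
    using f3(2) k3b ph2_0 by simp
  have I1n: "(\<integral>w. indicator (Ys n i) w * k1 w \<partial>M) \<le> 0"
  proof -
    have "0 \<le> (\<integral>w. - (indicator (Ys n i) w * k1 w) \<partial>M)"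
      by (intro integral_nonneg_AE) (auto simp: k1_def g1_nonpos mult_nonneg_nonpos indicator_def)
    thus ?thesis by simp
  qed
  have AAm: "(\<lambda>w. AA n w) \<in> borel_measurable M" by (rule AA_meas_M)
  have i0: "integrable M (\<lambda>w. indicator G w * AA n w)"
  proof (rule M.integrable_const_bound[where B=lv])
    show "AE x in M. norm (indicator G x * AA n x) \<le> lv"
      using GA lam AA_nonneg by (auto simp: indicator_def less_imp_le)
    show "(\<lambda>w. indicator G w * AA n w) \<in> borel_measurable M" using GM AAm by simp
  qed
  have eq: "indicator G w * AA (Suc n) w = indicator G w * AA n w + indicator (Ys n i) w * k1 w * 1
     + indicator (Ys n i) w * k2 w * ph1 (X n i w) + indicator (Ys n i) w * k3 w * ph2 (X n i w)"
    if "w \<in> space M" for w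
    unfolding AA_Suc[OF that] k1_def k2_def k3_def by (simp add: algebra_simps)
  have isum: "integrable M (\<lambda>w. indicator G w * AA n w + indicator (Ys n i) w * k1 w * 1
     + indicator (Ys n i) w * k2 w * ph1 (X n i w) + indicator (Ys n i) w * k3 w * ph2 (X n i w))"
    using i0 i1 i2 i3 by (intro Bochner_Integration.integrable_add)
  show "integrable M (\<lambda>w. indicator G w * AA (Suc n) w)"
  proof -
    have "integrable M (\<lambda>w. indicator G w * AA (Suc n) w) \<longleftrightarrow> integrable M (\<lambda>w. indicator G w * AA n w + indicator (Ys n i) w * k1 w * 1
     + indicator (Ys n i) w * k2 w * ph1 (X n i w) + indicator (Ys n i) w * k3 w * ph2 (X n i w))"
      by (rule Bochner_Integration.integrable_cong) (auto simp: eq)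
    thus ?thesis using isum by simp
  qed
  have "(\<integral>w. indicator G w * AA (Suc n) w \<partial>M) = (\<integral>w. indicator G w * AA n w + indicator (Ys n i) w * k1 w * 1
     + indicator (Ys n i) w * k2 w * ph1 (X n i w) + indicator (Ys n i) w * k3 w * ph2 (X n i w) \<partial>M)"
    by (rule Bochner_Integration.integral_cong) (auto simp: eq)
  also have "\<dots> = (\<integral>w. indicator G w * AA n w \<partial>M) + (\<integral>w. indicator (Ys n i) w * k1 w * 1 \<partial>M)
     + (\<integral>w. indicator (Ys n i) w * k2 w * ph1 (X n i w) \<partial>M) + (\<integral>w. indicator (Ys n i) w * k3 w * ph2 (X n i w) \<partial>M)"
    using i0 i1 i2 i3 by (simp add: Bochner_Integration.integral_add)
  also have "\<dots> \<le> (\<integral>w. indicator G w * AA n w \<partial>M)"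
    using I1 I2 I3 I1n by simp
  finally show "(\<integral>w. indicator G w * AA (Suc n) w \<partial>M) \<le> (\<integral>w. indicator G w * AA n w \<partial>M)" .
qed

end


context sa_proc
begin

lemma AA_meas_le: "k \<le> n \<Longrightarrow> (\<lambda>w. AA k w) \<in> borel_measurable (F n)"
  by (rule meas_lift[OF _ AA_meas])

lemma ville:
  assumes lam: "0 < lv"
  shows "measure M {w \<in> space M. \<exists>k\<le>n. lv \<le> AA k w} \<le> A0 / lv"
proof -
  interpret M: prob_space M by (rule M)
  define G where "G n = {w \<in> space M. \<forall>k\<le>n. AA k w < lv}" for n
  have GF: "G n \<in> sets (F n)" for n
  proof -
    have "{w \<in> space (F n). \<forall>k\<in>{..n}. AA k w < lv} \<in> sets (F n)"
    proof (rule sets.sets_Collect_finite_All)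
      fix k assume "k \<in> {..n}"
      hence [measurable]: "(\<lambda>w. AA k w) \<in> borel_measurable (F n)" using AA_meas_le by auto
      show "{w \<in> space (F n). AA k w < lv} \<in> sets (F n)" by measurable
    qed simp
    moreover have "G n = {w \<in> space (F n). \<forall>k\<in>{..n}. AA k w < lv}"
      unfolding G_def space_F by auto
    ultimately show ?thesis by simp
  qed
  have GM: "G n \<in> sets M" for n using GF sets_F_M by blast
  define V where "V n w = (if w \<in> G n then AA n w else lv)" for n w
  have Vb: "0 \<le> V n w" "V n w \<le> lv" for n w
    unfolding V_def G_def using AA_nonneg[of n w] lam by (auto simp: less_imp_le)
  have Vm: "V n \<in> borel_measurable M" for n
    unfolding V_def using AA_meas_M[of n] GM[of n] by (intro measurable_If_set) auto
  have Vi: "integrable M (V n)" for n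
    by (rule M.integrable_const_bound[where B=lv]) (use Vb Vm in auto)
  have VA: "(\<integral>w. V n w \<partial>M) \<le> A0" for n
  proof (induction n)
    case 0
    have "(\<integral>w. V 0 w \<partial>M) \<le> (\<integral>w. A0 \<partial>M)"
    proof (rule integral_mono[OF Vi])
      show "integrable M (\<lambda>w. A0)" by simp
      fix w assume "w \<in> space M"
      thus "V 0 w \<le> A0" unfolding V_def G_def using AA_0[of w] by auto
    qed
    thus ?case by (simp add: M.prob_space)
  next
    case (Suc n)
    define W where "W w = indicator (G n) w * AA (Suc n) w + lv * indicator (space M - G n) w" for w
    have GA: "w \<in> G n \<Longrightarrow> AA n w < lv" for w unfolding G_def by auto
    note sm = supermart[OF GF lam GA]
    have ii: "integrable M (\<lambda>w. lv * indicator (space M - G n) w)"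
      using GM by (intro integrable_mult_right integrable_real_indicator) (auto simp: less_top[symmetric] M.emeasure_finite)
    have Wi: "integrable M W" unfolding W_def using sm(1) ii
      by (rule Bochner_Integration.integrable_add)
    have "(\<integral>w. V (Suc n) w \<partial>M) \<le> (\<integral>w. W w \<partial>M)"
    proof (rule integral_mono[OF Vi Wi])
      fix w assume w: "w \<in> space M"
      show "V (Suc n) w \<le> W w"
      proof (cases "w \<in> G (Suc n)")
        case True
        hence "w \<in> G n" unfolding G_def by auto
        thus ?thesis using True unfolding V_def W_def by simp
      next
        case False
        show ?thesis
        proof (cases "w \<in> G n")
          case True
          hence "\<not> AA (Suc n) w < lv" using False w unfolding G_def by (auto simp: le_Suc_eq)
          thus ?thesis using True False unfolding V_def W_def by simp
        next
          case False2: False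
          thus ?thesis using False w unfolding V_def W_def by simp
        qed
      qed
    qed
    also have "(\<integral>w. W w \<partial>M) = (\<integral>w. indicator (G n) w * AA (Suc n) w \<partial>M) + lv * measure M (space M - G n)"
      unfolding W_def using sm(1) ii GM by (simp add: Bochner_Integration.integral_add)
    also have "\<dots> \<le> (\<integral>w. indicator (G n) w * AA n w \<partial>M) + lv * measure M (space M - G n)"
      using sm(2) by simp
    also have "(\<integral>w. indicator (G n) w * AA n w \<partial>M) + lv * measure M (space M - G n)
        = (\<integral>w. indicator (G n) w * AA n w + lv * indicator (space M - G n) w \<partial>M)"
    proof -
      have "integrable M (\<lambda>w. indicator (G n) w * AA n w)"
        by (rule M.integrable_const_bound[where B=lv]) 
           (use GA lam AA_nonneg GM AA_meas_M in \<open>auto simp: indicator_def less_imp_le\<close>)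
      thus ?thesis using ii GM by (simp add: Bochner_Integration.integral_add)
    qed
    also have "\<dots> = (\<integral>w. V n w \<partial>M)"
      by (rule Bochner_Integration.integral_cong) (auto simp: V_def indicator_def G_def)
    finally show ?case using Suc by simp
  qed
  have eqs: "{w \<in> space M. \<exists>k\<le>n. lv \<le> AA k w} = space M - G n"
    unfolding G_def by (auto simp: not_less)
  have "lv * measure M (space M - G n) = (\<integral>w. lv * indicator (space M - G n) w \<partial>M)"
    using GM by simp
  also have "\<dots> \<le> (\<integral>w. V n w \<partial>M)"
  proof (rule integral_mono[OF _ Vi])
    show "integrable M (\<lambda>w. lv * indicator (space M - G n) w)" using GM
      by (intro integrable_mult_right integrable_real_indicator) (auto simp: less_top[symmetric] M.emeasure_finite)
    fix w assume "w \<in> space M" thus "lv * indicator (space M - G n) w \<le> V n w"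
      using Vb[of n w] unfolding V_def by (auto simp: indicator_def)
  qed
  also have "\<dots> \<le> A0" by (rule VA)
  finally have "lv * measure M (space M - G n) \<le> A0" .
  thus ?thesis unfolding eqs using lam by (simp add: field_simps)
qed

lemma AA_bdd: "AE w in M. \<exists>C. \<forall>n. AA n w \<le> C"
proof -
  interpret M: prob_space M by (rule M)
  define UU where "UU N n = {w \<in> space M. \<exists>k\<le>n. real (Suc N) \<le> AA k w}" for N n
  define U where "U N = (\<Union>n. UU N n)" for N
  have Unm: "UU N n \<in> sets M" for N n
  proof -
    have "{w \<in> space M. real (Suc N) \<le> AA k w} \<in> sets M" for k
    proof -
      have [measurable]: "(\<lambda>w. AA k w) \<in> borel_measurable M" by (rule AA_meas_M)
      show ?thesis by measurable
    qed
    moreover have "UU N n = (\<Union>k\<in>{..n}. {w \<in> space M. real (Suc N) \<le> AA k w})"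
      unfolding UU_def by auto
    ultimately show ?thesis by auto
  qed
  have Um: "U N \<in> sets M" for N unfolding U_def using Unm by auto
  have Ub: "measure M (U N) \<le> A0 / real (Suc N)" for N
  proof -
    have "(\<lambda>n. measure M (UU N n)) \<longlonglongrightarrow> measure M (\<Union>n. UU N n)"
    proof (rule M.finite_Lim_measure_incseq)
      show "range (UU N) \<subseteq> M.events" using Unm by auto
      show "incseq (UU N)" unfolding incseq_def UU_def by (blast intro: order_trans)
    qed
    moreover have "\<forall>n. measure M (UU N n) \<le> A0 / real (Suc N)"
      unfolding UU_def using ville[of "real (Suc N)"] by auto
    ultimately show ?thesis unfolding U_def by (intro LIMSEQ_le_const2) blast+
  qed
  define Z where "Z = (\<Inter>N. U N)"
  have Zm: "Z \<in> sets M" unfolding Z_def using Um by auto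
  have Zb: "measure M Z \<le> A0 / real (Suc N)" for N
  proof -
    have "measure M Z \<le> measure M (U N)" unfolding Z_def using Um by (intro M.finite_measure_mono) auto
    thus ?thesis using Ub[of N] by simp
  qed
  have lim: "(\<lambda>N. A0 / real (Suc N)) \<longlonglongrightarrow> 0"
    using LIMSEQ_Suc[OF lim_const_over_n[of A0]] by simp
  have "measure M Z \<le> 0"
    using lim Zb by (intro LIMSEQ_le_const[OF lim]) auto
  hence "measure M Z = 0" using measure_nonneg[of M Z] by linarith
  hence Zn: "Z \<in> null_sets M" using Zm by (simp add: M.emeasure_eq_measure null_sets_def)
  show ?thesis
  proof (rule AE_I'[OF Zn])
    show "{w \<in> space M. \<not> (\<exists>C. \<forall>n. AA n w \<le> C)} \<subseteq> Z"
    proof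
      fix w assume w: "w \<in> {w \<in> space M. \<not> (\<exists>C. \<forall>n. AA n w \<le> C)}"
      show "w \<in> Z" unfolding Z_def U_def UU_def
      proof
        fix N
        from w obtain k where "\<not> AA k w \<le> real (Suc N)" by auto
        thus "w \<in> (\<Union>n. {w \<in> space M. \<exists>k\<le>n. real (Suc N) \<le> AA k w})" using w by (auto intro!: exI[of _ k])
      qed
    qed
  qed
qed

end


lemma inv_bound:
  fixes T tm \<eta> :: real
  assumes tm: "0 < tm" and eta: "0 < \<eta>" "\<eta> \<le> tm" and T: "\<bar>T - tm\<bar> \<le> tm/2"
  shows "\<bar>1 / max T \<eta> - 1 / tm\<bar> \<le> 2 / tm\<^sup>2 * \<bar>T - tm\<bar>"
proof -
  define m where "m = max T \<eta>"
  have Tl: "tm/2 \<le> T" using T by arith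
  have mp: "tm/2 \<le> m" unfolding m_def using Tl by simp
  have m0: "0 < m" using mp tm by simp
  have md: "\<bar>m - tm\<bar> \<le> \<bar>T - tm\<bar>" unfolding m_def using eta by (auto simp: max_def)
  have "1 / m - 1 / tm = (tm - m) / (m * tm)" using m0 tm by (simp add: field_simps)
  hence "\<bar>1 / m - 1 / tm\<bar> = \<bar>m - tm\<bar> / (m * tm)" using m0 tm by (simp add: abs_minus_commute)
  also have "\<dots> \<le> \<bar>T - tm\<bar> / ((tm/2) * tm)"
    using md mp m0 tm by (intro frac_le mult_right_mono) auto
  also have "\<dots> = 2 / tm\<^sup>2 * \<bar>T - tm\<bar>" by (simp add: power2_eq_square field_simps)
  finally show ?thesis unfolding m_def .
qed

lemma Sb_lower:
  assumes b0: "\<And>k. 0 \<le> \<beta> k" and a0: "\<And>k. 0 \<le> \<alpha> k" and bv: "\<And>k. n0 \<le> k \<Longrightarrow> vsig * \<alpha> k \<le> \<beta> k"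
    and vs: "0 \<le> vsig"
  shows "vsig * (\<Sum>k<m. \<alpha> k) - vsig * (\<Sum>k<n0. \<alpha> k) \<le> Sb \<beta> m"
proof (induction m)
  case 0 show ?case using vs a0 by (simp add: Sb_0 sum_nonneg)
next
  case (Suc m)
  show ?case
  proof (cases "Suc m \<le> n0")
    case True
    have "(\<Sum>k<Suc m. \<alpha> k) \<le> (\<Sum>k<n0. \<alpha> k)" using True a0 by (intro sum_mono2) auto
    hence "vsig * (\<Sum>k<Suc m. \<alpha> k) \<le> vsig * (\<Sum>k<n0. \<alpha> k)" using vs by (rule mult_left_mono)
    thus ?thesis using Sb_nonneg[of \<beta> "Suc m", OF b0] by linarith
  next
    case False
    hence "vsig * \<alpha> m \<le> \<beta> m" using bv by auto
    thus ?thesis using Suc by (simp add: Sb_Suc algebra_simps)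
  qed
qed

lemma det_main:
  fixes \<alpha> \<beta> \<eta> :: "nat \<Rightarrow> real" and T :: "nat \<Rightarrow> 'i::finite \<Rightarrow> real" and tm K :: "'i \<Rightarrow> real"
    and nuf :: "'i \<Rightarrow> nat \<Rightarrow> nat" and c vsig K' aB \<Delta> :: real
  assumes a0: "\<And>n. 0 < \<alpha> n" and aB: "\<And>n. \<alpha> n \<le> aB"
    and Sa: "filterlim (\<lambda>n. \<Sum>k\<le>n. \<alpha> k) at_top sequentially"
    and unif: "\<And>x. 0 < x \<Longrightarrow> x < 1 \<Longrightarrow> uniform_limit {x..1}
        (\<lambda>n y. (\<Sum>k\<le>nat \<lfloor>y * real n\<rfloor>. \<alpha> k) / (\<Sum>k\<le>n. \<alpha> k)) (\<lambda>y. 1) sequentially"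
    and b0: "\<And>n. 0 \<le> \<beta> n" and bv: "\<forall>\<^sub>F n in sequentially. vsig * \<alpha> n \<le> \<beta> n" and vs: "0 < vsig"
    and nule: "\<And>j n. nuf j n \<le> n"
    and Dl: "0 < \<Delta>" and nuli: "\<And>j. ereal \<Delta> \<le> Liminf sequentially (\<lambda>n. ereal (real (nuf j n) / real n))"
    and Tb: "\<And>j n. \<bar>T n j - tm j\<bar> \<le> K j * exp (- c * Sb \<beta> (nuf j n))"
    and tm: "\<And>j. 0 < tm j" and eta0: "\<And>n. 0 < \<eta> n" and etal: "\<eta> \<longlonglongrightarrow> 0"
    and K': "0 < K'" and c: "0 < c"
  shows "limsup (\<lambda>n. eln (K' * Max (range (\<lambda>j. \<bar>1 / max (T n j) (\<eta> n) - 1 / tm j\<bar>)))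
            / ereal (\<Sum>k\<le>n. \<alpha> k)) \<le> ereal (- (c * vsig))"
proof (rule ereal_le_epsilon2)
  fix \<epsilon> :: real assume \<epsilon>: "0 < \<epsilon>"
  define \<epsilon>1 where "\<epsilon>1 = min (1/2) (\<epsilon> / (2 * c * vsig))"
  have e1: "0 < \<epsilon>1" "\<epsilon>1 < 1" "c * vsig * \<epsilon>1 \<le> \<epsilon> / 2"
    using \<epsilon> c vs unfolding \<epsilon>1_def by (auto simp: field_simps min_def)
  define x where "x = min (\<Delta>/2) (1/2)"
  have x: "0 < x" "x < 1" "x < \<Delta>" using Dl unfolding x_def by auto
  obtain n0 where n0: "\<And>k. n0 \<le> k \<Longrightarrow> vsig * \<alpha> k \<le> \<beta> k"
    using bv unfolding eventually_sequentially by auto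
  define K0 where "K0 = vsig * (\<Sum>k<n0. \<alpha> k)"
  define K1 where "K1 = vsig * aB + K0"
  define Ksum where "Ksum = (\<Sum>j\<in>UNIV. \<bar>K j\<bar>)"
  have Ksum: "\<bar>K j\<bar> \<le> Ksum" for j unfolding Ksum_def by (rule member_le_sum) auto
  define tmin where "tmin = Min (range tm)"
  have tmin: "0 < tmin" "tmin \<le> tm j" for j unfolding tmin_def using tm by auto
  define Kall where "Kall = (\<Sum>j\<in>UNIV. 2 / (tm j)\<^sup>2 * \<bar>K j\<bar>) + 1"
  have Kall: "2 / (tm j)\<^sup>2 * \<bar>K j\<bar> \<le> Kall" "0 < Kall" for j
  proof -
    have "2 / (tm j)\<^sup>2 * \<bar>K j\<bar> \<le> (\<Sum>j\<in>UNIV. 2 / (tm j)\<^sup>2 * \<bar>K j\<bar>)" by (rule member_le_sum) auto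
    thus "2 / (tm j)\<^sup>2 * \<bar>K j\<bar> \<le> Kall" unfolding Kall_def by simp
    have "0 \<le> (\<Sum>j\<in>UNIV. 2 / (tm j)\<^sup>2 * \<bar>K j\<bar>)" by (intro sum_nonneg) auto
    thus "0 < Kall" unfolding Kall_def by simp
  qed
  define B0 where "B0 = K' * Kall * exp (c * K1)"
  have B0: "0 < B0" unfolding B0_def using K' Kall(2) by simp
  define XX where "XX = (Ksum + 1) * exp (c * K1)"
  define qs where "qs = tmin / (2 * XX)"
  have Ks0: "0 \<le> Ksum" using Ksum[of undefined] by simp
  have XX: "0 < XX" unfolding XX_def using Ks0 by simp
  have qs: "0 < qs" unfolding qs_def using tmin(1) XX by simp
  define rate where "rate = c * vsig * (1 - \<epsilon>1)"
  have rate: "0 < rate" unfolding rate_def using c vs e1 by simp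
  define Big where "Big = max (2 * \<bar>ln B0\<bar> / \<epsilon> + 1) (\<bar>ln qs\<bar> / rate + 1)"
  define Sa where "Sa n = (\<Sum>k\<le>n. \<alpha> k)" for n
  have ev1: "\<forall>\<^sub>F n in sequentially. Big \<le> Sa n"
    using Sa unfolding filterlim_at_top Sa_def by auto
  have ev2: "\<forall>\<^sub>F n in sequentially. \<forall>j. x < real (nuf j n) / real n"
  proof (rule eventually_all_finite)
    fix j
    have "ereal x < ereal \<Delta>" using x by simp
    hence "\<forall>\<^sub>F n in sequentially. ereal x < ereal (real (nuf j n) / real n)"
      using nuli[of j] unfolding le_Liminf_iff by blast
    thus "\<forall>\<^sub>F n in sequentially. x < real (nuf j n) / real n" by simp
  qed
  have ev3: "\<forall>\<^sub>F n in sequentially. \<forall>y\<in>{x..1}. dist ((\<Sum>k\<le>nat \<lfloor>y * real n\<rfloor>. \<alpha> k) / (\<Sum>k\<le>n. \<alpha> k)) 1 < \<epsilon>1"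
    using uniform_limitD[OF unif[OF x(1,2)] e1(1)] by simp
  have ev4: "\<forall>\<^sub>F n in sequentially. \<eta> n < tmin"
    using order_tendstoD(2)[OF etal tmin(1)] .
  have ev5: "\<forall>\<^sub>F n in sequentially. 1 \<le> n" by (rule eventually_ge_at_top)
  have pt: "eln (K' * Max (range (\<lambda>j. \<bar>1 / max (T n j) (\<eta> n) - 1 / tm j\<bar>))) / ereal (\<Sum>k\<le>n. \<alpha> k)
        \<le> ereal (- (c * vsig)) + ereal \<epsilon>"
    if h1: "Big \<le> Sa n" and h2: "\<forall>j. x < real (nuf j n) / real n"
      and h3: "\<forall>y\<in>{x..1}. dist ((\<Sum>k\<le>nat \<lfloor>y * real n\<rfloor>. \<alpha> k) / (\<Sum>k\<le>n. \<alpha> k)) 1 < \<epsilon>1"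
      and h4: "\<eta> n < tmin" and h5: "1 \<le> n" for n
  proof -
    define S where "S = Sa n"
    have Sbig: "Big \<le> S" using h1 unfolding S_def .
    have S0: "0 < S" using Sbig unfolding Big_def using \<epsilon> rate
      by (smt (verit) divide_nonneg_pos abs_ge_zero)
    define Q where "Q = exp (- rate * S)"
    have Q0: "0 < Q" unfolding Q_def by simp
    have Qqs: "Q \<le> qs"
    proof -
      have "\<bar>ln qs\<bar> / rate + 1 \<le> S" using Sbig unfolding Big_def by simp
      hence "\<bar>ln qs\<bar> \<le> rate * S" using rate by (simp add: field_simps)
      hence "- rate * S \<le> ln qs" by simp
      hence "Q \<le> exp (ln qs)" unfolding Q_def by simp
      thus ?thesis using qs by simp
    qed
    have jb: "\<bar>T n j - tm j\<bar> \<le> \<bar>K j\<bar> * exp (c * K1) * Q" for j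
    proof -
      define \<nu> where "\<nu> = nuf j n"
      have nl: "\<nu> \<le> n" unfolding \<nu>_def by (rule nule)
      define r where "r = real \<nu> / real n"
      have r: "r \<in> {x..1}" using h2 nl h5 unfolding r_def \<nu>_def by (auto simp: less_imp_le field_simps)
      have fl: "nat \<lfloor>r * real n\<rfloor> = \<nu>" unfolding r_def using h5 by simp
      have "dist ((\<Sum>k\<le>\<nu>. \<alpha> k) / S) 1 < \<epsilon>1" using h3 r fl unfolding S_def Sa_def by force
      hence "1 - \<epsilon>1 < (\<Sum>k\<le>\<nu>. \<alpha> k) / S" by (simp add: dist_real_def abs_less_iff)
      hence A1: "(1 - \<epsilon>1) * S < (\<Sum>k\<le>\<nu>. \<alpha> k)" using S0 by (simp add: field_simps)
      have "(\<Sum>k\<le>\<nu>. \<alpha> k) = (\<Sum>k<\<nu>. \<alpha> k) + \<alpha> \<nu>" by (simp add: lessThan_Suc_atMost[symmetric])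
      hence A2: "(1 - \<epsilon>1) * S - aB \<le> (\<Sum>k<\<nu>. \<alpha> k)" using A1 aB[of \<nu>] by linarith
      have A3: "vsig * (\<Sum>k<\<nu>. \<alpha> k) - K0 \<le> Sb \<beta> \<nu>"
        unfolding K0_def using Sb_lower[of \<beta> \<alpha> n0 vsig \<nu>] b0 a0 n0 vs by (auto simp: less_imp_le)
      have "vsig * ((1 - \<epsilon>1) * S - aB) \<le> vsig * (\<Sum>k<\<nu>. \<alpha> k)" using A2 vs by (intro mult_left_mono) auto
      hence A4: "vsig * (1 - \<epsilon>1) * S - K1 \<le> Sb \<beta> \<nu>" using A3 unfolding K1_def by (simp add: algebra_simps)
      have "- c * Sb \<beta> \<nu> \<le> - c * (vsig * (1 - \<epsilon>1) * S - K1)" using A4 c by simp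
      also have "\<dots> = c * K1 + (- rate * S)" unfolding rate_def by (simp add: algebra_simps)
      finally have "exp (- c * Sb \<beta> \<nu>) \<le> exp (c * K1) * Q" unfolding Q_def by (simp add: exp_add[symmetric])
      hence "K j * exp (- c * Sb \<beta> \<nu>) \<le> \<bar>K j\<bar> * (exp (c * K1) * Q)"
        by (intro order.trans[OF mult_right_mono[of "K j" "\<bar>K j\<bar>"]] mult_left_mono) auto
      thus ?thesis using Tb[of n j] unfolding \<nu>_def by (simp add: mult.assoc)
    qed
    have db: "\<bar>1 / max (T n j) (\<eta> n) - 1 / tm j\<bar> \<le> Kall * exp (c * K1) * Q" for j
    proof -
      have "\<bar>K j\<bar> * exp (c * K1) * Q \<le> (Ksum + 1) * exp (c * K1) * qs"
        using Ksum[of j] Qqs Q0 by (intro mult_mono) auto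
      also have "\<dots> = XX * qs" unfolding XX_def ..
      also have "\<dots> = tmin / 2" unfolding qs_def using XX by simp
      finally have "\<bar>T n j - tm j\<bar> \<le> tm j / 2" using jb[of j] tmin(2)[of j] by linarith
      hence "\<bar>1 / max (T n j) (\<eta> n) - 1 / tm j\<bar> \<le> 2 / (tm j)\<^sup>2 * \<bar>T n j - tm j\<bar>"
        using tm[of j] eta0[of n] h4 tmin(2)[of j] by (intro inv_bound) auto
      also have "\<dots> \<le> 2 / (tm j)\<^sup>2 * (\<bar>K j\<bar> * exp (c * K1) * Q)"
        using jb[of j] by (intro mult_left_mono) auto
      also have "\<dots> = (2 / (tm j)\<^sup>2 * \<bar>K j\<bar>) * (exp (c * K1) * Q)" by simp
      also have "\<dots> \<le> Kall * (exp (c * K1) * Q)"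
        using Kall(1)[of j] Q0 by (intro mult_right_mono) auto
      finally show ?thesis by (simp add: mult.assoc)
    qed
    define \<delta> where "\<delta> = K' * Max (range (\<lambda>j. \<bar>1 / max (T n j) (\<eta> n) - 1 / tm j\<bar>))"
    have Mx: "Max (range (\<lambda>j. \<bar>1 / max (T n j) (\<eta> n) - 1 / tm j\<bar>)) \<le> Kall * exp (c * K1) * Q"
      using db by (subst Max_le_iff) auto
    have Mx0: "0 \<le> Max (range (\<lambda>j. \<bar>1 / max (T n j) (\<eta> n) - 1 / tm j\<bar>))"
      by (rule order.trans[OF abs_ge_zero Max_ge[of _ "\<bar>1 / max (T n undefined) (\<eta> n) - 1 / tm undefined\<bar>"]]) auto
    have d0: "0 \<le> \<delta>" unfolding \<delta>_def using K' Mx0 by simp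
    have dB: "\<delta> \<le> B0 * Q" unfolding \<delta>_def B0_def using Mx K' by (simp add: mult.assoc mult_left_mono)
    show ?thesis
    proof (cases "\<delta> = 0")
      case True
      thus ?thesis using S0 unfolding \<delta>_def[symmetric] eln_def Sa_def S_def by simp
    next
      case False
      hence dp: "0 < \<delta>" using d0 by simp
      have "ln \<delta> \<le> ln (B0 * Q)" using dp dB by simp
      also have "\<dots> = ln B0 - rate * S" using B0 Q0 unfolding Q_def by (simp add: ln_mult)
      finally have l1: "ln \<delta> \<le> ln B0 - rate * S" .
      have "2 * \<bar>ln B0\<bar> / \<epsilon> + 1 \<le> S" using Sbig unfolding Big_def by simp
      hence "2 * \<bar>ln B0\<bar> \<le> \<epsilon> * S" using \<epsilon> by (simp add: field_simps)
      hence l2: "ln B0 \<le> \<epsilon> / 2 * S" by simp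
      have "ln \<delta> \<le> (\<epsilon> / 2 - rate) * S" using l1 l2 by (simp add: algebra_simps)
      also have "\<dots> \<le> (- (c * vsig) + \<epsilon>) * S"
        using e1(3) S0 unfolding rate_def by (intro mult_right_mono) (auto simp: algebra_simps)
      finally have "ln \<delta> / S \<le> - (c * vsig) + \<epsilon>" using S0 by (simp add: field_simps)
      thus ?thesis using dp S0 unfolding \<delta>_def[symmetric] eln_def Sa_def S_def by simp
    qed
  qed
  have "\<forall>\<^sub>F n in sequentially. eln (K' * Max (range (\<lambda>j. \<bar>1 / max (T n j) (\<eta> n) - 1 / tm j\<bar>))) / ereal (\<Sum>k\<le>n. \<alpha> k)
        \<le> ereal (- (c * vsig)) + ereal \<epsilon>"
    using ev1 ev2 ev3 ev4 ev5 by eventually_elim (rule pt)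
  thus "limsup (\<lambda>n. eln (K' * Max (range (\<lambda>j. \<bar>1 / max (T n j) (\<eta> n) - 1 / tm j\<bar>)))
            / ereal (\<Sum>k\<le>n. \<alpha> k)) \<le> ereal (- (c * vsig)) + ereal \<epsilon>"
    by (rule Limsup_bounded)
qed


context sa_proc
begin

lemma ee_bound:
  assumes "AA n w \<le> C"
  shows "\<bar>Tseq Y X T0 \<beta> n w i - (\<integral>x. fst (snd x) \<partial>P i)\<bar> \<le> sqrt C * exp (- c * Sb \<beta> (nu Y n i w))"
proof -
  define S where "S = Sb \<beta> (nu Y n i w)"
  have "hh n w * (ee n w)\<^sup>2 \<le> AA n w"
    unfolding AA_def using sig2_nonneg Dp_le[of "nu Y n i w"] by auto
  hence h: "exp (2*c*S) * (ee n w)\<^sup>2 \<le> C" using assms unfolding hh_def S_def by simp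
  have "exp (2*c*S) = (exp (c*S))\<^sup>2" by (simp add: power2_eq_square exp_add[symmetric])
  hence "(exp (c*S) * \<bar>ee n w\<bar>)\<^sup>2 \<le> C" using h by (simp add: power_mult_distrib)
  hence "exp (c*S) * \<bar>ee n w\<bar> \<le> sqrt C" by (simp add: real_le_rsqrt)
  hence "\<bar>ee n w\<bar> \<le> sqrt C * exp (- (c * S))"
    by (simp add: exp_minus field_simps)
  thus ?thesis unfolding ee_def tt_def S_def by simp
qed

end

lemma mk_proc:
  assumes "sa_setting M F P Y X" "\<And>n. 0 \<le> \<beta> n" "\<And>n. \<beta> n \<le> 1" "0 \<le> c" "c \<le> 1"
    "summable (\<lambda>j. exp (2*c*Sb \<beta> (Suc j)) * (\<beta> j)\<^sup>2)"
    "integrable (P i) (\<lambda>x. (fst (snd x))\<^sup>2)" "integrable (P i) (\<lambda>x. fst (snd x))"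
  shows "sa_proc M F P Y X \<beta> i c"
  using assms unfolding sa_proc_def sa_proc_axioms_def by auto

lemma summ_D:
  fixes \<beta> :: "nat \<Rightarrow> real"
  assumes b0: "\<And>n. 0 \<le> \<beta> n" and l: "ell \<beta> < ereal l'" and lc: "l' + 2 * c < 0" and c0: "0 \<le> c"
  shows "summable (\<lambda>j. exp (2*c*Sb \<beta> (Suc j)) * (\<beta> j)\<^sup>2)"
proof -
  define \<kappa> where "\<kappa> = - (l' + 2 * c)"
  have k: "0 < \<kappa>" unfolding \<kappa>_def using lc by simp
  define u where "u n = exp (- \<kappa> * Sb \<beta> n)" for n
  have ud: "decseq u" unfolding u_def decseq_def using k Sb_mono[of \<beta>, OF b0] by (auto intro!: mult_left_mono)
  obtain L where "u \<longlonglongrightarrow> L" using decseq_convergent[OF ud, of 0] unfolding u_def by auto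
  hence su: "summable (\<lambda>n. (u n - u (Suc n)) / \<kappa>)" by (intro summable_divide telescope_summable')
  have ev: "\<forall>\<^sub>F n in sequentially. ereal (ln (\<beta> n) / (\<Sum>k\<le>n. \<beta> k)) < ereal l'"
    using l unfolding ell_def by (rule Limsup_lessD)
  have l'0: "l' < 0" using lc c0 by linarith
  show ?thesis
  proof (rule summable_comparison_test_ev[OF _ su])
    show "\<forall>\<^sub>F n in sequentially. norm (exp (2*c*Sb \<beta> (Suc n)) * (\<beta> n)\<^sup>2) \<le> (u n - u (Suc n)) / \<kappa>"
      using ev
    proof eventually_elim
      case (elim n)
      define S where "S = Sb \<beta> (Suc n)"
      have S: "S = (\<Sum>k\<le>n. \<beta> k)" unfolding S_def Sb_def by (simp add: lessThan_Suc_atMost)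
      have r: "ln (\<beta> n) / S < l'" using elim S by simp
      have Sn: "S = Sb \<beta> n + \<beta> n" unfolding S_def Sb_Suc ..
      have tel: "\<beta> n * exp (- \<kappa> * S) \<le> (u n - u (Suc n)) / \<kappa>"
      proof -
        have "1 + \<kappa> * \<beta> n \<le> exp (\<kappa> * \<beta> n)" by (rule exp_ge_add_one_self)
        hence "exp (- \<kappa> * S) * (1 + \<kappa> * \<beta> n) \<le> exp (- \<kappa> * S) * exp (\<kappa> * \<beta> n)" by simp
        also have "exp (- \<kappa> * S) * exp (\<kappa> * \<beta> n) = u n"
          unfolding u_def Sn by (simp add: exp_add[symmetric] algebra_simps)
        finally have "\<kappa> * (\<beta> n * exp (- \<kappa> * S)) \<le> u n - u (Suc n)"
          unfolding u_def S_def by (simp add: algebra_simps)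
        thus ?thesis using k by (simp add: field_simps)
      qed
      show ?case
      proof (cases "\<beta> n = 0")
        case True
        thus ?thesis using tel by simp
      next
        case False
        hence bp: "0 < \<beta> n" using b0[of n] by simp
        have S0: "0 \<le> S" unfolding S_def by (rule Sb_nonneg[OF b0])
        have "S \<noteq> 0" using r l'0 by auto
        hence Sp: "0 < S" using S0 by simp
        hence "ln (\<beta> n) < l' * S" using r by (simp add: field_simps)
        hence "\<beta> n < exp (l' * S)" using bp by (metis exp_less_cancel_iff exp_ln)
        hence "exp (2*c*S) * (\<beta> n)\<^sup>2 \<le> exp (2*c*S) * (\<beta> n * exp (l' * S))"
          using bp by (intro mult_left_mono) (auto simp: power2_eq_square)
        also have "\<dots> = \<beta> n * exp (- \<kappa> * S)" unfolding \<kappa>_def 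
          by (simp add: exp_add[symmetric] algebra_simps)
        finally show ?thesis using tel unfolding S_def by simp
      qed
    qed
  qed
qed


lemma ereal_max_half: "max (ereal r / 2) (-1) = ereal (max (r / 2) (-1))"
proof -
  have m1: "(-1::ereal) = ereal (-1)" by (simp add: one_ereal_def)
  show ?thesis unfolding m1 by (simp add: max_def)
qed

lemma ereal_cstar: "0 < v \<Longrightarrow> ereal v * max (ereal r / 2) (-1) = ereal (- (min 1 (- r / 2) * v))"
  unfolding ereal_max_half by (simp add: min_def max_def algebra_simps)

theorem lemma4p8:
  fixes M :: "'w measure"
    and F :: "nat \<Rightarrow> 'w measure"
    and P :: "'s::finite \<times> 'a::finite \<Rightarrow> ('s \<times> real \<times> real) measure"
    and f :: "('s \<times> 'a \<Rightarrow> real) \<Rightarrow> real"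
    and Q0 T0 :: "'s \<times> 'a \<Rightarrow> real"
    and \<alpha> \<beta> \<eta> :: "nat \<Rightarrow> real"
    and Y :: "nat \<Rightarrow> 'w \<Rightarrow> ('s \<times> 'a) set"
    and X :: "nat \<Rightarrow> 's \<times> 'a \<Rightarrow> 'w \<Rightarrow> 's \<times> real \<times> real"
    and vsig K' :: real
  assumes M: "prob_space M"
    (* SMDP laws *)
    and P_prob: "\<And>i. prob_space (P i)"
    and P_sets: "\<And>i. sets (P i) = sets sample_space"
    and P_tau_nonneg: "\<And>i. AE x in P i. fst (snd x) \<ge> 0"
    and condM: "cond_M P"
    and wc: "weakly_communicating (ptrans P)"
    (* (F) *)
    and condF: "cond_F f"
    (* filtration (the past) and the sampling scheme *)
    and F_sub: "\<And>n. subalgebra M (F n)"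
    and F_mono: "\<And>n. sets (F n) \<subseteq> sets (F (Suc n))"
    and Y_meas: "\<And>n i. {w \<in> space M. i \<in> Y n w} \<in> sets (F n)"
    and Y_nonempty: "\<And>n w. w \<in> space M \<Longrightarrow> Y n w \<noteq> {}"
    and X_meas: "\<And>n i. X n i \<in> measurable (F (Suc n)) sample_space"
    and X_law: "\<And>n i A B. A \<in> sets sample_space \<Longrightarrow> B \<in> sets (F n) \<Longrightarrow>
        measure M {w \<in> space M. w \<in> B \<and> i \<in> Y n w \<and> X n i w \<in> A}
          = measure (P i) A * measure M {w \<in> space M. w \<in> B \<and> i \<in> Y n w}"
    (* initial values *)
    and T0_nonneg: "\<And>i. T0 i \<ge> 0"
    (* (R)(i) *)
    and R_alpha: "cond_R_alpha \<alpha>"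
    and R_nu: "\<exists>\<Delta>>0. AE w in M. \<forall>i.
        Liminf sequentially (\<lambda>n. ereal (real (nu Y n i w) / real n)) \<ge> ereal \<Delta>"
    and R_ratio: "\<And>x. x > 0 \<Longrightarrow> AE w in M. \<forall>i j. convergent (\<lambda>n.
        (\<Sum>k = nu Y n i w..nu Y (Nidx \<alpha> n x) i w. \<alpha> k) /
        (\<Sum>k = nu Y n j w..nu Y (Nidx \<alpha> n x) j w. \<alpha> k))"
    (* (R)(ii) *)
    and R_beta: "cond_R_beta \<beta>"
    (* (R)(iii) *)
    and R_eta_pos: "\<And>n. \<eta> n > 0"
    and R_eta_lim: "\<eta> \<longlonglongrightarrow> 0"
    (* (R2)(i) *)
    and R2_i:
      "(\<exists>A. A / 2 > A_star P f \<and>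
            (\<forall>n. \<alpha> n = (if A * real n = 0 then 1 / A else 1 / (A * real n))) \<and>
            (\<exists>\<gamma>>0. \<gamma> * A > A_star P f \<and>
               (AE w in M. \<forall>i. \<exists>p. 0 < p \<and> p \<le> 1 \<and>
                   (\<lambda>n. real (nu Y n i w) / real n) \<longlonglongrightarrow> p \<and>
                   limsup (\<lambda>n. ereal (real n powr \<gamma> * \<bar>real (nu Y n i w) / real n - p\<bar>)) < \<infinity>)))
       \<or> (\<exists>A. A > A_star P f \<and>
            (\<forall>n. \<alpha> n = (if A * real n * ln (real n) = 0 then 1 / A
                         else 1 / (A * real n * ln (real n)))))"
    (* (R2)(ii) *)
    and R2_ii_sig: "vsig > A_star P f"
    and R2_ii_beta: "\<forall>\<^sub>F n in sequentially. \<beta> n \<ge> vsig * \<alpha> n"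
    and R2_ii_ell: "- ereal vsig * ell \<beta> / 2 > ereal (A_star P f)"
    (* K' *)
    and K'_pos: "K' > 0"
  shows "AE w in M.
     limsup (\<lambda>n. eln (K' * Max (range (\<lambda>i.
               \<bar>1 / max (snd (QT Q0 T0 \<alpha> \<beta> \<eta> f Y X n w) i) (\<eta> n) - 1 / tmean P i\<bar>)))
             / ereal (\<Sum>k\<le>n. \<alpha> k))
       \<le> ereal vsig * max (ell \<beta> / 2) (-1)"
proof -
  have SS: "sa_setting M F P Y X"
    using M P_prob P_sets F_sub F_mono Y_meas X_meas X_law by (rule sa_setting.intro)
  have spS: "space (sample_space :: ('s \<times> real \<times> real) measure) = UNIV"
    unfolding sample_space_def by (simp add: space_pair_measure)
  have spP: "space (P i) = UNIV" for i
    using sets_eq_imp_space_eq[OF P_sets[of i]] spS by simp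
  obtain \<epsilon> where \<epsilon>: "0 < \<epsilon>" and \<epsilon>P: "\<And>i. measure (P i) {x. fst (snd x) \<le> \<epsilon>} < 1"
    and tau2: "\<And>i. integrable (P i) (\<lambda>x. (fst (snd x))\<^sup>2)"
    using condM unfolding cond_M_def by blast
  have tmP: "(\<lambda>x. fst (snd x)) \<in> borel_measurable (P i)" for i
    using fstsnd_meas P_sets[of i] measurable_cong_sets by blast
  have tau1: "integrable (P i) (\<lambda>x. fst (snd x))" for i
  proof -
    interpret Pi: prob_space "P i" by (rule P_prob)
    have I: "integrable (P i) (\<lambda>x. 1 + (fst (snd x))\<^sup>2)"
      using tau2[of i] by (intro Bochner_Integration.integrable_add) auto
    have AEb: "AE x in P i. norm (fst (snd x)) \<le> norm (1 + (fst (snd x))\<^sup>2)"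
      using abs_le_1_sq by (auto intro!: AE_I2)
    show ?thesis by (rule Bochner_Integration.integrable_bound[OF I tmP[of i] AEb])
  qed
  have tpos: "0 < tmean P i" for i
  proof -
    interpret Pi: prob_space "P i" by (rule P_prob)
    define E :: "('s \<times> real \<times> real) set" where "E = {x. \<epsilon> < fst (snd x)}"
    have Em: "E \<in> sets (P i)"
    proof -
      have "{x \<in> space (P i). \<epsilon> < fst (snd x)} \<in> sets (P i)" using tmP[of i] by measurable
      thus ?thesis unfolding E_def spP by simp
    qed
    have "UNIV - E = {x. fst (snd x) \<le> \<epsilon>}" unfolding E_def by auto
    hence "measure (P i) E = 1 - measure (P i) {x. fst (snd x) \<le> \<epsilon>}"
      using Pi.prob_compl[OF Em] spP by simp
    hence mE: "0 < measure (P i) E" using \<epsilon>P[of i] by simp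
    have "(\<integral>x. \<epsilon> * indicator E x \<partial>P i) \<le> (\<integral>x. fst (snd x) \<partial>P i)"
    proof (rule integral_mono_AE)
      show "integrable (P i) (\<lambda>x. \<epsilon> * indicator E x)" using Em
        by (intro integrable_mult_right integrable_real_indicator) (auto simp: less_top[symmetric] Pi.emeasure_finite)
      show "integrable (P i) (\<lambda>x. fst (snd x))" by (rule tau1)
      show "AE x in P i. \<epsilon> * indicator E x \<le> fst (snd x)"
        using P_tau_nonneg[of i] by eventually_elim (auto simp: E_def indicator_def)
    qed
    moreover have "(\<integral>x. \<epsilon> * indicator E x \<partial>P i) = \<epsilon> * measure (P i) E" using Em by simp
    ultimately have "\<epsilon> * measure (P i) E \<le> tmean P i" unfolding tmean_def by (simp add: spP)
    moreover have "0 < \<epsilon> * measure (P i) E" using \<epsilon> mE by simp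
    ultimately show ?thesis by linarith
  qed
  have tminp: "0 < tmin P" unfolding tmin_def using tpos by (subst Min_gr_iff) auto
  have lip0: "0 \<le> lip_const f"
  proof -
    obtain L where L: "\<forall>x y. \<bar>f x - f y\<bar> \<le> L * sup_norm (\<lambda>i. x i - y i)"
      using condF unfolding cond_F_def sup_lipschitz_def by blast
    have sn: "0 \<le> sup_norm z" for z :: "'s \<times> 'a \<Rightarrow> real"
      unfolding sup_norm_def by (rule order.trans[OF abs_ge_zero Max_ge[of _ "\<bar>z undefined\<bar>"]]) auto
    have "max L 0 \<in> {L. L \<ge> 0 \<and> (\<forall>x y. \<bar>f x - f y\<bar> \<le> L * sup_norm (\<lambda>i. x i - y i))}"
    proof -
      have "\<bar>f x - f y\<bar> \<le> max L 0 * sup_norm (\<lambda>i. x i - y i)" for x y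
      proof -
        have "L * sup_norm (\<lambda>i. x i - y i) \<le> max L 0 * sup_norm (\<lambda>i. x i - y i)"
          by (rule mult_right_mono) (simp, rule sn)
        thus ?thesis using L[rule_format, of x y] by linarith
      qed
      thus ?thesis by auto
    qed
    hence ne: "{L. L \<ge> 0 \<and> (\<forall>x y. \<bar>f x - f y\<bar> \<le> L * sup_norm (\<lambda>i. x i - y i))} \<noteq> {}" by blast
    show ?thesis unfolding lip_const_def by (rule cInf_greatest[OF ne]) auto
  qed
  have "0 < 2 / tmin P" using tminp by simp
  hence Ast: "0 < A_star P f" unfolding A_star_def using lip0 by linarith
  have vs: "0 < vsig" using R2_ii_sig Ast by linarith
  have Sa: "filterlim (\<lambda>n. \<Sum>k\<le>n. \<alpha> k) at_top sequentially"
    and sq: "summable (\<lambda>n. (\<alpha> n)\<^sup>2)"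
    and unif: "\<And>x. 0 < x \<Longrightarrow> x < 1 \<Longrightarrow> uniform_limit {x..1}
        (\<lambda>n y. (\<Sum>k\<le>nat \<lfloor>y * real n\<rfloor>. \<alpha> k) / (\<Sum>k\<le>n. \<alpha> k)) (\<lambda>y. 1) sequentially"
    using R_alpha unfolding cond_R_alpha_def by auto
  have Aform: "(\<exists>A>0. \<forall>n. \<alpha> n = (if A * real n = 0 then 1 / A else 1 / (A * real n))) \<or>
     (\<exists>A>0. \<forall>n. \<alpha> n = (if A * real n * ln (real n) = 0 then 1 / A else 1 / (A * real n * ln (real n))))"
    using R2_i Ast
    apply (elim disjE exE conjE)
    subgoal for A \<gamma> by (rule disjI1, rule exI[of _ A]) auto
    subgoal for A by (rule disjI2, rule exI[of _ A]) auto
    done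
  have apos: "0 < \<alpha> n" for n
    using Aform
  proof (elim disjE exE conjE)
    fix A :: real assume A0: "0 < A" and al: "\<forall>n. \<alpha> n = (if A * real n = 0 then 1 / A else 1 / (A * real n))"
    show ?thesis using al[rule_format, of n] A0 by (auto simp: zero_less_mult_iff)
  next
    fix A :: real assume A0: "0 < A" and al: "\<forall>n. \<alpha> n = (if A * real n * ln (real n) = 0 then 1 / A
                         else 1 / (A * real n * ln (real n)))"
    show ?thesis
    proof (cases "A * real n * ln (real n) = 0")
      case True thus ?thesis using al[rule_format, of n] A0 by simp
    next
      case False
      hence "n \<noteq> 0" "n \<noteq> 1" by auto
      hence "2 \<le> n" by simp
      hence "0 < ln (real n)" by simp
      thus ?thesis using al[rule_format, of n] A0 False by simp
    qed
  qed
  obtain aB where aB: "\<And>n. \<alpha> n \<le> aB"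
  proof -
    have "convergent (\<lambda>n. (\<alpha> n)\<^sup>2)" using summable_LIMSEQ_zero[OF sq] unfolding convergent_def by blast
    hence "Bseq (\<lambda>n. (\<alpha> n)\<^sup>2)" by (rule convergent_imp_Bseq)
    then obtain B where B: "\<And>n. norm ((\<alpha> n)\<^sup>2) \<le> B" unfolding Bseq_def by blast
    have "\<alpha> n \<le> 1 + B" for n using abs_le_1_sq[of "\<alpha> n"] B[of n] by simp
    thus ?thesis using that by blast
  qed
  have b0: "\<And>n. 0 \<le> \<beta> n" and b1: "\<And>n. \<beta> n \<le> 1" using R_beta unfolding cond_R_beta_def by auto
  obtain cstar where cs0: "0 < cstar" and cs1: "cstar \<le> 1"
    and csR: "ereal vsig * max (ell \<beta> / 2) (-1) = ereal (- (cstar * vsig))"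
    and csl: "\<And>c. 0 < c \<Longrightarrow> c < cstar \<Longrightarrow> ell \<beta> < ereal (- 2 * c)"
  proof (cases "ell \<beta>")
    case (real r)
    have "- ereal vsig * ell \<beta> / 2 = ereal (- vsig * r / 2)" using real by (simp add: ereal_minus(1)[symmetric])
    hence "ereal (A_star P f) < ereal (- vsig * r / 2)" using R2_ii_ell by simp
    hence "0 < - vsig * r / 2" using Ast by simp
    hence "vsig * r < 0" by simp
    hence r0: "r < 0" using vs by (auto simp: mult_less_0_iff)
    show ?thesis
    proof (rule that[of "min 1 (- r / 2)"])
      show "0 < min 1 (- r / 2)" using r0 by simp
      show "min 1 (- r / 2) \<le> 1" by simp
      show "ereal vsig * max (ell \<beta> / 2) (-1) = ereal (- (min 1 (- r / 2) * vsig))"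
        unfolding real by (rule ereal_cstar[OF vs])
      fix c :: real assume "0 < c" "c < min 1 (- r / 2)"
      thus "ell \<beta> < ereal (- 2 * c)" using real by simp
    qed
  next
    case PInf
    thus ?thesis using R2_ii_ell vs by simp
  next
    case MInf
    show ?thesis
    proof (rule that[of 1])
      show "ereal vsig * max (ell \<beta> / 2) (-1) = ereal (- (1 * vsig))" using MInf by simp
      fix c :: real assume "0 < c" "c < 1"
      thus "ell \<beta> < ereal (- 2 * c)" using MInf by simp
    qed auto
  qed
  define cs where "cs k = cstar * (1 - 1 / (real k + 2))" for k
  have csk: "0 < cs k" "cs k < cstar" "cs k \<le> 1" for k
  proof -
    have "1 / (real k + 2) < 1" "0 < 1 / (real k + 2)" by auto
    thus "0 < cs k" "cs k < cstar" unfolding cs_def using cs0 by (auto simp: mult_less_cancel_left1)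
    thus "cs k \<le> 1" using cs1 by simp
  qed
  have summD: "summable (\<lambda>j. exp (2 * cs k * Sb \<beta> (Suc j)) * (\<beta> j)\<^sup>2)" for k
  proof -
    obtain l' where l': "ell \<beta> < ereal l'" "ereal l' < ereal (- 2 * cs k)"
      using ereal_dense2[OF csl[OF csk(1,2)]] by blast
    show ?thesis using summ_D[OF b0 l'(1)] l'(2) csk(1)[of k] by simp
  qed
  have AEk: "AE w in M. \<exists>C. \<forall>n. \<bar>Tseq Y X T0 \<beta> n w i - tmean P i\<bar> \<le> sqrt C * exp (- cs k * Sb \<beta> (nu Y n i w))"
    for i k
  proof -
    interpret Pr: sa_proc M F P Y X \<beta> T0 i "cs k"
      by (rule mk_proc[OF SS b0 b1 less_imp_le[OF csk(1)] csk(3) summD tau2 tau1])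
    show ?thesis using Pr.AA_bdd
    proof eventually_elim
      case (elim w)
      then obtain C where "\<forall>n. Pr.AA n w \<le> C" by blast
      thus ?case using Pr.ee_bound unfolding tmean_def by blast
    qed
  qed
  have AEall: "AE w in M. \<forall>k i. \<exists>C. \<forall>n. \<bar>Tseq Y X T0 \<beta> n w i - tmean P i\<bar> \<le> sqrt C * exp (- cs k * Sb \<beta> (nu Y n i w))"
    using AEk by (simp add: AE_all_countable)
  obtain \<Delta> where D0: "0 < \<Delta>" and Dnu: "AE w in M. \<forall>i.
        Liminf sequentially (\<lambda>n. ereal (real (nu Y n i w) / real n)) \<ge> ereal \<Delta>"
    using R_nu by blast
  show ?thesis using AEall Dnu
  proof eventually_elim
    case (elim w)
    define L where "L = limsup (\<lambda>n. eln (K' * Max (range (\<lambda>i.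
               \<bar>1 / max (snd (QT Q0 T0 \<alpha> \<beta> \<eta> f Y X n w) i) (\<eta> n) - 1 / tmean P i\<bar>)))
             / ereal (\<Sum>k\<le>n. \<alpha> k))"
    have Lk: "L \<le> ereal (- (cs k * vsig))" for k
    proof -
      obtain Kf where Kf: "\<And>i n. \<bar>Tseq Y X T0 \<beta> n w i - tmean P i\<bar> \<le> sqrt (Kf i) * exp (- cs k * Sb \<beta> (nu Y n i w))"
        using elim(1) by metis
      show ?thesis unfolding L_def
      proof (rule det_main[where K="\<lambda>i. sqrt (Kf i)" and nuf="\<lambda>j n. nu Y n j w" and \<Delta>=\<Delta>])
        show "\<And>n. 0 < \<alpha> n" by (rule apos)
        show "\<And>n. \<alpha> n \<le> aB" by (rule aB)
        show "filterlim (\<lambda>n. \<Sum>k\<le>n. \<alpha> k) at_top sequentially" by (rule Sa)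
        show "\<And>x. 0 < x \<Longrightarrow> x < 1 \<Longrightarrow> uniform_limit {x..1}
          (\<lambda>n y. (\<Sum>k\<le>nat \<lfloor>y * real n\<rfloor>. \<alpha> k) / (\<Sum>k\<le>n. \<alpha> k)) (\<lambda>y. 1) sequentially" by (rule unif)
        show "\<And>n. 0 \<le> \<beta> n" by (rule b0)
        show "\<forall>\<^sub>F n in sequentially. vsig * \<alpha> n \<le> \<beta> n" using R2_ii_beta by simp
        show "0 < vsig" by (rule vs)
        show "\<And>j n. nu Y n j w \<le> n" by (rule nu_le)
        show "0 < \<Delta>" by (rule D0)
        show "\<And>j. ereal \<Delta> \<le> Liminf sequentially (\<lambda>n. ereal (real (nu Y n j w) / real n))"
          using elim(2) by blast
        show "\<And>j n. \<bar>snd (QT Q0 T0 \<alpha> \<beta> \<eta> f Y X n w) j - tmean P j\<bar> \<le> sqrt (Kf j) * exp (- cs k * Sb \<beta> (nu Y n j w))"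
          unfolding snd_QT by (rule Kf)
        show "\<And>j. 0 < tmean P j" by (rule tpos)
        show "\<And>n. 0 < \<eta> n" by (rule R_eta_pos)
        show "\<eta> \<longlonglongrightarrow> 0" by (rule R_eta_lim)
        show "0 < K'" by (rule K'_pos)
        show "0 < cs k" by (rule csk)
      qed
    qed
    have "L \<le> ereal (- (cstar * vsig))"
    proof (rule ereal_le_epsilon2)
      fix e :: real assume e: "0 < e"
      obtain k :: nat where k: "cstar * vsig / e < real k" using reals_Archimedean2 by blast
      have "cstar * vsig / (real k + 2) < e"
      proof -
        have "cstar * vsig < e * real k" using k e by (simp add: field_simps)
        also have "\<dots> \<le> e * (real k + 2)" using e by simp
        finally show ?thesis by (simp add: field_simps)
      qed
      hence "- (cs k * vsig) \<le> - (cstar * vsig) + e" unfolding cs_def by (simp add: field_simps)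
      hence "ereal (- (cs k * vsig)) \<le> ereal (- (cstar * vsig)) + ereal e" by simp
      thus "L \<le> ereal (- (cstar * vsig)) + ereal e" using Lk[of k] by (rule order.trans[rotated])
    qed
    thus ?case unfolding L_def csR .
  qed
qed


end
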